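(* Let $r\ge 3$, $n\ge1$, $N\ge0$ be integers and let $a,b_1,\dots,b_{r-3},q,x$ be nonzero complex parameters, generic so that no denominators vanish (no balancing condition is assumed). Then $${}_{r+1}\Omega_r^{(n)}(a;b_1,\dots,b_{r-3},q^{-N};q,x)={}_{r+1}\Omega_r^{(N)}(aqx;b_1,\dots,b_{r-3},x^{n};x^{-1},q^{-1}).$$ More precisely, the identity holds termwise: the term of the left-hand sum indexed by $\lambda\in\Lambda_{nN}$ equals the term of the right-hand sum indexed by the conjugate partition $\lambda'\in\Lambda_{Nn}$.
   Context: Fix $p\in\mathbb C$ with $|p|<1$. For nonzero $y$, $E(y)=\prod_{j=0}^\infty(1-yp^j)(1-p^{j+1}/y)$, $E(y_1,\dots,y_m)=\prod_s E(y_s)$. For a base $Q$ and integer $k\ge0$, $(y;Q)_k=\prod_{j=0}^{k-1}E(yQ^j)$; for $k<0$, $(y;Q)_k=1/(yQ^{k};Q)_{-k}$; $(y_1,\dots,y_m;Q)_k=\prod_s(y_s;Q)_k$. For $\lambda\in\mathbb Z^n$ and bases $Q,X$, $(y;Q,X)_\lambda=\prod_{j=1}^n(yX^{1-j};Q)_{\lambda_j}$, $(y_1,\dots,y_m;Q,X)_\lambda=\prod_s(y_s;Q,X)_\lambda$. Let $\Lambda_{nN}=\{\lambda\in\mathbb Z^n: N\ge\lambda_1\ge\dots\ge\lambda_n\ge0\}$. For $\lambda\in\Lambda_{nN}$ its conjugate is $\lambda'\in\Lambda_{Nn}$ with $\lambda'_j=\#\{i:\lambda_i\ge j\}$, $j=1,\dots,N$.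 For integers $n\ge1$, $M\ge0$, bases $Q,X$ and parameters $a,b_1,\dots,b_{r-3}$, define \begin{multline*} {}_{r+1}\Omega_r^{(n)}(a;b_1,\dots,b_{r-3},Q^{-M};Q,X)=\sum_{\lambda\in\Lambda_{nM}}\prod_{i=1}^n\left(\frac{E(aX^{2(1-i)}Q^{2\lambda_i})}{E(aX^{2(1-i)})}Q^{\lambda_i}X^{2(i-1)\lambda_i}\right)\\ \times\prod_{1\le i<j\le n}\left(\frac{E(X^{j-i}Q^{\lambda_i-\lambda_j})}{E(X^{j-i})}\frac{E(aX^{2-i-j}Q^{\lambda_i+\lambda_j})}{E(aX^{2-i-j})}\frac{(aX^{3-i-j};Q)_{\lambda_i+\lambda_j}(X^{j-i+1};Q)_{\lambda_i-\lambda_j}}{(aQX^{1-i-j};Q)_{\lambda_i+\lambda_j}(QX^{j-i-1};Q)_{\lambda_i-\lambda_j}}\right)\\ \times\frac{(aX^{1-n},b_1,\dots,b_{r-3},Q^{-M};Q,X)_\lambda}{(QX^{n-1},aQ/b_1,\dots,aQ/b_{r-3},aQ^{M+1};Q,X)_\lambda}. \end{multline*} On the right-hand side of the claim this is used with $n\mapsto N$, $M\mapsto n$, $Q=x^{-1}$, $X=q^{-1}$ (so that $Q^{-M}=x^n$) and $a\mapsto aqx$. *)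

theory Defs
  imports "HOL-Analysis.Analysis"
begin

definition Eth :: "complex \<Rightarrow> complex \<Rightarrow> complex" where
  "Eth p y = (\<Prod>j. (1 - y * p ^ j) * (1 - p ^ (j + 1) / y))"

definition epoch :: "complex \<Rightarrow> complex \<Rightarrow> complex \<Rightarrow> int \<Rightarrow> complex" where
  "epoch p y Q k =
     (if 0 \<le> k then (\<Prod>j<nat k. Eth p (y * Q ^ j))
      else 1 / (\<Prod>j<nat (- k). Eth p (y * Q powi k * Q ^ j)))"

definition epochP :: "complex \<Rightarrow> complex list \<Rightarrow> complex \<Rightarrow> complex \<Rightarrow> nat \<Rightarrow> (nat \<Rightarrow> int) \<Rightarrow> complex" where
  "epochP p ys Q X n lam =
     (\<Prod>y\<leftarrow>ys. \<Prod>j\<in>{1..n}. epoch p (y * X powi (1 - int j)) Q (lam j))"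

text \<open>Lambda_{nN}: partitions with at most n parts, each at most N (entries indexed 1..n,
  extended by 0 outside so that the set is finite).\<close>
definition Lam :: "nat \<Rightarrow> nat \<Rightarrow> (nat \<Rightarrow> nat) set" where
  "Lam n N = {lam. (\<forall>i. lam i \<le> N) \<and> (\<forall>i j. 1 \<le> i \<longrightarrow> i \<le> j \<longrightarrow> j \<le> n \<longrightarrow> lam j \<le> lam i)
                  \<and> (\<forall>i. i \<notin> {1..n} \<longrightarrow> lam i = 0)}"

definition conjp :: "nat \<Rightarrow> nat \<Rightarrow> (nat \<Rightarrow> nat) \<Rightarrow> (nat \<Rightarrow> nat)" where
  "conjp n N lam = (\<lambda>j. if j \<in> {1..N} then card {i\<in>{1..n}. j \<le> lam i} else 0)"

definition omega_term ::
  "complex \<Rightarrow> nat \<Rightarrow> nat \<Rightarrow> complex \<Rightarrow> complex list \<Rightarrow> complex \<Rightarrow> complex \<Rightarrow> (nat \<Rightarrow> nat) \<Rightarrow> complex" where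
  "omega_term p n M a bs Q X lam =
     (\<Prod>i\<in>{1..n}.
        Eth p (a * X powi (2 * (1 - int i)) * Q powi (2 * int (lam i))) / Eth p (a * X powi (2 * (1 - int i)))
        * Q powi (int (lam i)) * X powi (2 * (int i - 1) * int (lam i)))
   * (\<Prod>i\<in>{1..n}. \<Prod>j\<in>{i<..n}.
        Eth p (X powi (int j - int i) * Q powi (int (lam i) - int (lam j))) / Eth p (X powi (int j - int i))
        * (Eth p (a * X powi (2 - int i - int j) * Q powi (int (lam i) + int (lam j)))
             / Eth p (a * X powi (2 - int i - int j)))
        * (epoch p (a * X powi (3 - int i - int j)) Q (int (lam i) + int (lam j))
           * epoch p (X powi (int j - int i + 1)) Q (int (lam i) - int (lam j)))
        / (epoch p (a * Q * X powi (1 - int i - int j)) Q (int (lam i) + int (lam j))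
           * epoch p (Q * X powi (int j - int i - 1)) Q (int (lam i) - int (lam j))))
   * epochP p ((a * X powi (1 - int n)) # bs @ [Q powi (- int M)]) Q X n (\<lambda>i. int (lam i))
     / epochP p ((Q * X powi (int n - 1)) # map (\<lambda>b. a * Q / b) bs @ [a * Q powi (int M + 1)]) Q X n
         (\<lambda>i. int (lam i))"

text \<open>_{r+1}Omega_r^{(n)}(a; b_1,...,b_{r-3}, Q^{-M}; Q, X), with bs = [b_1,...,b_{r-3}].\<close>
definition Omega ::
  "complex \<Rightarrow> nat \<Rightarrow> nat \<Rightarrow> complex \<Rightarrow> complex list \<Rightarrow> complex \<Rightarrow> complex \<Rightarrow> complex" where
  "Omega p n M a bs Q X = (\<Sum>lam\<in>Lam n M. omega_term p n M a bs Q X lam)"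

definition omega_nondeg ::
  "complex \<Rightarrow> nat \<Rightarrow> nat \<Rightarrow> complex \<Rightarrow> complex list \<Rightarrow> complex \<Rightarrow> complex \<Rightarrow> bool" where
  "omega_nondeg p n M a bs Q X \<longleftrightarrow>
     (\<forall>b\<in>set bs. b \<noteq> 0) \<and>
     (\<forall>i\<in>{1..n}. Eth p (a * X powi (2 * (1 - int i))) \<noteq> 0) \<and>
     (\<forall>i\<in>{1..n}. \<forall>j\<in>{i<..n}. Eth p (X powi (int j - int i)) \<noteq> 0
                         \<and> Eth p (a * X powi (2 - int i - int j)) \<noteq> 0) \<and>
     (\<forall>lam\<in>Lam n M.
        (\<forall>i\<in>{1..n}. \<forall>j\<in>{i<..n}.
           epoch p (a * Q * X powi (1 - int i - int j)) Q (int (lam i) + int (lam j)) \<noteq> 0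
         \<and> epoch p (Q * X powi (int j - int i - 1)) Q (int (lam i) - int (lam j)) \<noteq> 0)
      \<and> epochP p ((Q * X powi (int n - 1)) # map (\<lambda>b. a * Q / b) bs @ [a * Q powi (int M + 1)]) Q X n
           (\<lambda>i. int (lam i)) \<noteq> 0)"

end

theory Submission
  imports Defs
begin

lemma prodinf_head:
  fixes f :: "nat \<Rightarrow> complex"
  assumes "convergent_prod f"
  shows "prodinf f = f 0 * (\<Prod>n. f (Suc n))"
proof -
  have "convergent_prod (\<lambda>n. f (Suc n))" using assms by simp
  hence "(\<lambda>n. f (Suc n)) has_prod (\<Prod>n. f (Suc n))" by (rule convergent_prod_has_prod)
  hence "f has_prod ((\<Prod>n. f (Suc n)) * f 0)" by (rule has_prod_Suc_imp)
  thus ?thesis by (simp add: has_prod_iff mult.commute)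
qed

lemma conv_geom1:
  fixes p y :: complex
  assumes "norm p < 1"
  shows "convergent_prod (\<lambda>j. 1 - y * p ^ j)"
proof -
  have "summable (\<lambda>j. norm y * norm p ^ j)"
    using assms by (intro summable_mult summable_geometric) auto
  hence "summable (\<lambda>j. norm ((1 - y * p ^ j) - 1))"
    by (simp add: norm_mult norm_power)
  hence "abs_convergent_prod (\<lambda>j. 1 - y * p ^ j)"
    by (rule summable_imp_abs_convergent_prod)
  thus ?thesis by (rule abs_convergent_prod_imp_convergent_prod)
qed

lemma Eth_split:
  assumes "norm p < 1"
  shows "Eth p y = (\<Prod>j. 1 - y * p ^ j) * (\<Prod>j. 1 - (p / y) * p ^ j)"
proof -
  have c1: "convergent_prod (\<lambda>j. 1 - y * p ^ j)" using conv_geom1[OF assms] .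
  have c2: "convergent_prod (\<lambda>j. 1 - (p/y) * p ^ j)" using conv_geom1[OF assms] .
  have "(\<Prod>j. 1 - y * p ^ j) * (\<Prod>j. 1 - (p / y) * p ^ j)
      = (\<Prod>j. (1 - y * p ^ j) * (1 - (p / y) * p ^ j))"
    by (rule prodinf_mult[OF c1 c2])
  also have "\<dots> = Eth p y" unfolding Eth_def
    by (intro prodinf_cong) (simp add: field_simps)
  finally show ?thesis by simp
qed

lemma Eth_inv:
  assumes "norm p < 1" and "y \<noteq> 0"
  shows "Eth p (inverse y) = - inverse y * Eth p y"
proof -
  define A where "A = (\<Prod>j. 1 - y * p ^ Suc j)"
  define B where "B = (\<Prod>j. 1 - inverse y * p ^ Suc j)"
  have h1: "(\<Prod>j. 1 - y * p ^ j) = (1 - y) * A"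
    unfolding A_def by (subst prodinf_head[OF conv_geom1[OF assms(1)]]) simp
  have h2: "(\<Prod>j. 1 - inverse y * p ^ j) = (1 - inverse y) * B"
    unfolding B_def by (subst prodinf_head[OF conv_geom1[OF assms(1)]]) simp
  have e1: "Eth p y = (1 - y) * A * B"
  proof -
    have "Eth p y = (\<Prod>j. 1 - y * p ^ j) * (\<Prod>j. 1 - (p / y) * p ^ j)"
      by (rule Eth_split[OF assms(1)])
    also have "(\<Prod>j. 1 - (p / y) * p ^ j) = B"
      unfolding B_def by (intro prodinf_cong) (simp add: field_simps)
    finally show ?thesis using h1 by simp
  qed
  have e2: "Eth p (inverse y) = (1 - inverse y) * B * A"
  proof -
    have "Eth p (inverse y) = (\<Prod>j. 1 - inverse y * p ^ j) * (\<Prod>j. 1 - (p / inverse y) * p ^ j)"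
      by (rule Eth_split[OF assms(1)])
    also have "(\<Prod>j. 1 - (p / inverse y) * p ^ j) = A"
      unfolding A_def by (intro prodinf_cong) (simp add: field_simps)
    finally show ?thesis using h2 by simp
  qed
  show ?thesis using assms(2) unfolding e1 e2 by (simp add: field_simps)
qed

definition Fq :: "complex \<Rightarrow> complex \<Rightarrow> complex" where
  "Fq p z = (\<Prod>j. 1 - z * p ^ j)"

lemma Eth_Fq:
  assumes "norm p < 1"
  shows "Eth p y = Fq p y * Fq p (p / y)"
  using Eth_split[OF assms] by (simp add: Fq_def)

lemma Fq_cont_on:
  assumes p: "norm p < 1"
  shows "continuous_on (cball 0 R) (Fq p)"
proof -
  let ?f = "\<lambda>n z. 1 - z * p ^ n"
  have uc: "uniformly_convergent_on (cball 0 R) (\<lambda>N z. \<Prod>n<N. ?f n z)"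
  proof (rule uniformly_convergent_on_prod')
    show "\<And>n. continuous_on (cball 0 R) (?f n)" by (intro continuous_intros)
    show "compact (cball (0::complex) R)" by simp
    show "uniformly_convergent_on (cball 0 R) (\<lambda>N z. \<Sum>n<N. norm (?f n z - 1))"
    proof (rule Weierstrass_m_test'[where M="\<lambda>n. R * norm p ^ n"])
      fix n and z :: complex assume "z \<in> cball 0 R"
      hence "norm z \<le> R" by simp
      thus "norm (norm (?f n z - 1)) \<le> R * norm p ^ n"
        by (simp add: norm_mult norm_power mult_right_mono)
    next
      show "summable (\<lambda>n. R * norm p ^ n)"
        using p by (intro summable_mult summable_geometric) auto
    qed
  qed
  hence ul: "uniform_limit (cball 0 R) (\<lambda>N z. \<Prod>n<N. ?f n z) (\<lambda>z. lim (\<lambda>N. \<Prod>n<N. ?f n z)) sequentially"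
    using uniformly_convergent_uniform_limit_iff by blast
  have eq: "lim (\<lambda>N. \<Prod>n<N. ?f n z) = Fq p z" for z
  proof -
    have "(\<lambda>N. \<Prod>n\<le>N. ?f n z) \<longlonglongrightarrow> Fq p z"
      unfolding Fq_def by (rule convergent_prod_LIMSEQ[OF conv_geom1[OF p]])
    hence "(\<lambda>N. \<Prod>n<N. ?f n z) \<longlonglongrightarrow> Fq p z"
      using LIMSEQ_lessThan_iff_atMost by blast
    thus ?thesis by (rule limI)
  qed
  have "continuous_on (cball 0 R) (\<lambda>z. lim (\<lambda>N. \<Prod>n<N. ?f n z))"
    by (rule uniform_limit_theorem[OF _ ul]) (auto intro!: always_eventually continuous_intros)
  thus ?thesis using eq by simp
qed

lemma Fq_isCont:
  assumes p: "norm p < 1"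
  shows "isCont (Fq p) z"
proof -
  have "continuous_on (cball 0 (norm z + 1)) (Fq p)" by (rule Fq_cont_on[OF p])
  moreover have "z \<in> interior (cball 0 (norm z + 1))" by simp
  ultimately show ?thesis using continuous_on_interior by blast
qed

lemma Eth_tendsto:
  assumes p: "norm p < 1" and g: "(g \<longlongrightarrow> y0) F" and y0: "y0 \<noteq> 0"
  shows "((\<lambda>t. Eth p (g t)) \<longlongrightarrow> Eth p y0) F"
proof -
  have "((\<lambda>t. Fq p (g t) * Fq p (p / g t)) \<longlongrightarrow> Fq p y0 * Fq p (p / y0)) F"
  proof (intro tendsto_mult)
    show "((\<lambda>t. Fq p (g t)) \<longlongrightarrow> Fq p y0) F"
      by (rule isCont_tendsto_compose[OF Fq_isCont[OF p] g])
    have "((\<lambda>t. p / g t) \<longlongrightarrow> p / y0) F" using g y0 by (intro tendsto_intros)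
    thus "((\<lambda>t. Fq p (p / g t)) \<longlongrightarrow> Fq p (p / y0)) F"
      by (rule isCont_tendsto_compose[OF Fq_isCont[OF p]])
  qed
  thus ?thesis by (simp add: Eth_Fq[OF p])
qed

lemma Fq_zero:
  assumes p: "norm p < 1" and "Fq p z = 0"
  shows "\<exists>j. 1 - z * p ^ j = 0"
  using prodinf_nonzero[OF conv_geom1[OF p, of z]] assms(2) unfolding Fq_def by blast

lemma Eth_zero:
  assumes p: "norm p < 1" and y: "y \<noteq> 0" and "Eth p y = 0"
  shows "\<exists>k::int. y = p powi k"
proof -
  from assms have "Fq p y = 0 \<or> Fq p (p / y) = 0" by (simp add: Eth_Fq)
  thus ?thesis
  proof
    assume "Fq p y = 0"
    then obtain j where "1 - y * p ^ j = 0" using Fq_zero[OF p] by blast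
    hence "y * p ^ j = 1" by simp
    hence pj: "p ^ j \<noteq> 0" by (metis mult_zero_right zero_neq_one)
    have "y = inverse (p ^ j)" using \<open>y * p ^ j = 1\<close> pj by (simp add: field_simps)
    hence "y = p powi (- int j)" by (simp add: power_int_minus)
    thus ?thesis by blast
  next
    assume "Fq p (p / y) = 0"
    then obtain j where "1 - (p / y) * p ^ j = 0" using Fq_zero[OF p] by blast
    hence "y = p ^ Suc j" using y by (simp add: field_simps)
    hence "y = p powi (int (Suc j))" by (simp only: power_int_of_nat)
    thus ?thesis by blast
  qed
qed

lemma LamD:
  assumes "lam \<in> Lam n N"
  shows "\<And>i. lam i \<le> N" "\<And>i j. 1 \<le> i \<Longrightarrow> i \<le> j \<Longrightarrow> j \<le> n \<Longrightarrow> lam j \<le> lam i"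
    "\<And>i. i \<notin> {1..n} \<Longrightarrow> lam i = 0"
  using assms unfolding Lam_def by auto

lemma downclosed_eq:
  fixes S :: "nat set"
  assumes "S \<subseteq> {1..n}" and dc: "\<And>i i'. i \<in> S \<Longrightarrow> 1 \<le> i' \<Longrightarrow> i' \<le> i \<Longrightarrow> i' \<in> S"
  shows "S = {1..card S}"
proof (cases "S = {}")
  case True thus ?thesis by simp
next
  case False
  have fin: "finite S" using assms(1) finite_subset by blast
  define M where "M = Max S"
  have MS: "M \<in> S" using Max_in[OF fin False] M_def by simp
  have "S = {1..M}"
  proof
    show "S \<subseteq> {1..M}" using assms(1) Max_ge[OF fin] M_def by auto
    show "{1..M} \<subseteq> S" using dc[OF MS] by auto
  qed
  thus ?thesis by simp
qed

lemma conj_set: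
  assumes L: "lam \<in> Lam n N"
  shows "{i \<in> {1..n}. k \<le> lam i} = {1..card {i \<in> {1..n}. k \<le> lam i}}"
proof (rule downclosed_eq[of _ n])
  show "{i \<in> {1..n}. k \<le> lam i} \<subseteq> {1..n}" by auto
  fix i i' assume "i \<in> {i \<in> {1..n}. k \<le> lam i}" "1 \<le> i'" "i' \<le> i"
  thus "i' \<in> {i \<in> {1..n}. k \<le> lam i}" using LamD(2)[OF L, of i' i] by auto
qed

lemma conj_cell:
  assumes L: "lam \<in> Lam n N" and j: "1 \<le> j" "j \<le> n" and k: "1 \<le> k" "k \<le> N"
  shows "k \<le> lam j \<longleftrightarrow> j \<le> conjp n N lam k"
proof -
  have "conjp n N lam k = card {i \<in> {1..n}. k \<le> lam i}" using k by (simp add: conjp_def)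
  hence e: "{i \<in> {1..n}. k \<le> lam i} = {1..conjp n N lam k}" using conj_set[OF L, of k] by simp
  have "k \<le> lam j \<longleftrightarrow> j \<in> {i \<in> {1..n}. k \<le> lam i}" using j by auto
  also have "\<dots> \<longleftrightarrow> j \<le> conjp n N lam k" using j unfolding e by auto
  finally show ?thesis .
qed

lemma conjp_le: "conjp n N lam k \<le> n"
proof -
  have "card {i \<in> {1..n}. k \<le> lam i} \<le> card {1..n}" by (intro card_mono) auto
  thus ?thesis by (simp add: conjp_def)
qed

lemma conjp_Lam:
  assumes L: "lam \<in> Lam n N"
  shows "conjp n N lam \<in> Lam N n"
  unfolding Lam_def
proof (intro CollectI conjI allI impI)
  fix i show "conjp n N lam i \<le> n" by (rule conjp_le)
next
  fix i j assume "1 \<le> i" "i \<le> j" "j \<le> N"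
  thus "conjp n N lam j \<le> conjp n N lam i"
    unfolding conjp_def by (auto intro!: card_mono)
next
  fix i assume "i \<notin> {1..N}" thus "conjp n N lam i = 0" unfolding conjp_def by (rule if_not_P)
qed

lemma conjp_invol:
  assumes L: "lam \<in> Lam n N"
  shows "conjp N n (conjp n N lam) = lam"
proof
  fix j
  show "conjp N n (conjp n N lam) j = lam j"
  proof (cases "j \<in> {1..n}")
    case True
    have "{k \<in> {1..N}. j \<le> conjp n N lam k} = {1..lam j}"
    proof (rule set_eqI)
      fix k
      have lj: "lam j \<le> N" by (rule LamD(1)[OF L])
      show "k \<in> {k \<in> {1..N}. j \<le> conjp n N lam k} \<longleftrightarrow> k \<in> {1..lam j}"
      proof (cases "1 \<le> k \<and> k \<le> N")
        case True
        thus ?thesis using conj_cell[OF L _ _, of j k] \<open>j \<in> {1..n}\<close> by auto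
      next
        case False
        thus ?thesis using lj by auto
      qed
    qed
    thus ?thesis using True by (simp add: conjp_def)
  next
    case False
    have "conjp N n (conjp n N lam) j = 0" unfolding conjp_def by (rule if_not_P) (rule False)
    thus ?thesis using LamD(3)[OF L False] by simp
  qed
qed

lemma conjp_bij: "bij_betw (conjp n N) (Lam n N) (Lam N n)"
proof (rule bij_betw_byWitness[where f'="conjp N n"])
  show "\<forall>a\<in>Lam n N. conjp N n (conjp n N a) = a" using conjp_invol by blast
  show "\<forall>a'\<in>Lam N n. conjp n N (conjp N n a') = a'" using conjp_invol by blast
  show "conjp n N ` Lam n N \<subseteq> Lam N n" using conjp_Lam by blast
  show "conjp N n ` Lam N n \<subseteq> Lam n N" using conjp_Lam by blast
qed

lemma cells_prod:
  assumes L: "lam \<in> Lam n N"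
  shows "(\<Prod>j\<in>{1..n}. \<Prod>c\<in>{..<lam j}. F j c)
       = (\<Prod>k\<in>{1..N}. \<Prod>m\<in>{..<conjp n N lam k}. F (Suc m) (k - 1))"
proof -
  have "(\<Prod>j\<in>{1..n}. \<Prod>c\<in>{..<lam j}. F j c) = (\<Prod>(j,c)\<in>Sigma {1..n} (\<lambda>j. {..<lam j}). F j c)"
    by (rule prod.Sigma) auto
  also have "\<dots> = (\<Prod>(k,m)\<in>Sigma {1..N} (\<lambda>k. {..<conjp n N lam k}). F (Suc m) (k - 1))"
  proof (rule prod.reindex_bij_witness[where i="\<lambda>(k,m). (Suc m, k - 1)" and j="\<lambda>(j,c). (Suc c, j - 1)"])
    fix a assume a: "a \<in> Sigma {1..n} (\<lambda>j. {..<lam j})"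
    obtain j c where ajc: "a = (j,c)" by (cases a)
    with a have j: "1 \<le> j" "j \<le> n" and c: "c < lam j" by auto
    have "Suc c \<le> N" using c LamD(1)[OF L, of j] by simp
    hence "Suc c \<le> lam j \<longleftrightarrow> j \<le> conjp n N lam (Suc c)" using conj_cell[OF L j, of "Suc c"] by simp
    hence "j - 1 < conjp n N lam (Suc c)" using c j by auto
    thus "(\<lambda>(j,c). (Suc c, j - 1)) a \<in> Sigma {1..N} (\<lambda>k. {..<conjp n N lam k})"
      using ajc \<open>Suc c \<le> N\<close> by auto
    show "(\<lambda>(k,m). (Suc m, k - 1)) ((\<lambda>(j,c). (Suc c, j - 1)) a) = a" using ajc j by auto
    show "(case (\<lambda>(j,c). (Suc c, j - 1)) a of (k,m) \<Rightarrow> F (Suc m) (k - 1)) = (case a of (j,c) \<Rightarrow> F j c)"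
      using ajc j by auto
  next
    fix b assume b: "b \<in> Sigma {1..N} (\<lambda>k. {..<conjp n N lam k})"
    obtain k m where bkm: "b = (k,m)" by (cases b)
    with b have k: "1 \<le> k" "k \<le> N" and m: "m < conjp n N lam k" by auto
    have "Suc m \<le> n" using m conjp_le[of n N lam k] by simp
    hence "k \<le> lam (Suc m)" using conj_cell[OF L _ _ k, of "Suc m"] m by simp
    thus "(\<lambda>(k,m). (Suc m, k - 1)) b \<in> Sigma {1..n} (\<lambda>j. {..<lam j})"
      using bkm \<open>Suc m \<le> n\<close> k by auto
    show "(\<lambda>(j,c). (Suc c, j - 1)) ((\<lambda>(k,m). (Suc m, k - 1)) b) = b" using bkm k by auto
  qed
  also have "\<dots> = (\<Prod>k\<in>{1..N}. \<Prod>m\<in>{..<conjp n N lam k}. F (Suc m) (k - 1))"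
    by (rule prod.Sigma[symmetric]) auto
  finally show ?thesis .
qed

definition mon :: "complex \<Rightarrow> complex \<Rightarrow> complex \<Rightarrow> int \<Rightarrow> int \<Rightarrow> int \<Rightarrow> complex" where
  "mon a Q X g b c = a powi g * Q powi b * X powi c"

definition Em :: "complex \<Rightarrow> complex \<Rightarrow> complex \<Rightarrow> complex \<Rightarrow> int \<Rightarrow> int \<Rightarrow> int \<Rightarrow> complex" where
  "Em p a Q X g b c = Eth p (mon a Q X g b c)"

definition epm :: "complex \<Rightarrow> complex \<Rightarrow> complex \<Rightarrow> complex \<Rightarrow> int \<Rightarrow> int \<Rightarrow> int \<Rightarrow> nat \<Rightarrow> complex" where
  "epm p a Q X g b c u = (\<Prod>k<u. Em p a Q X g (b + int k) c)"

definition sg :: "complex \<Rightarrow> nat \<Rightarrow> nat \<Rightarrow> complex \<Rightarrow> complex \<Rightarrow> complex \<Rightarrow> nat \<Rightarrow> nat \<Rightarrow> complex" where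
  "sg p n M a Q X i u =
     Em p a Q X 1 (2 * int u) (2 * (1 - int i)) / Em p a Q X 1 0 (2 * (1 - int i))
     * mon a Q X 0 (int u) 0 * mon a Q X 0 0 (2 * (int i - 1) * int u)
     * (epm p a Q X 1 0 (1 - int n + (1 - int i)) u * epm p a Q X 0 (- int M) (1 - int i) u)
     / (epm p a Q X 0 1 (int n - 1 + (1 - int i)) u * epm p a Q X 1 (int M + 1) (1 - int i) u)"

definition pp :: "complex \<Rightarrow> complex \<Rightarrow> complex \<Rightarrow> complex \<Rightarrow> nat \<Rightarrow> nat \<Rightarrow> nat \<Rightarrow> nat \<Rightarrow> complex" where
  "pp p a Q X i j u v =
     Em p a Q X 0 (int u - int v) (int j - int i) / Em p a Q X 0 0 (int j - int i)
     * (Em p a Q X 1 (int u + int v) (2 - int i - int j) / Em p a Q X 1 0 (2 - int i - int j))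
     * (epm p a Q X 1 0 (3 - int i - int j) (u + v) * epm p a Q X 0 0 (int j - int i + 1) (u - v))
     / (epm p a Q X 1 1 (1 - int i - int j) (u + v) * epm p a Q X 0 1 (int j - int i - 1) (u - v))"

definition ct :: "complex \<Rightarrow> nat \<Rightarrow> nat \<Rightarrow> complex \<Rightarrow> complex \<Rightarrow> complex \<Rightarrow> (nat \<Rightarrow> nat) \<Rightarrow> complex" where
  "ct p n M a Q X lam = (\<Prod>i\<in>{1..n}. sg p n M a Q X i (lam i))
      * (\<Prod>i\<in>{1..n}. \<Prod>j\<in>{i<..n}. pp p a Q X i j (lam i) (lam j))"

context
  fixes a Q X :: complex
  assumes nz: "a \<noteq> 0" "Q \<noteq> 0" "X \<noteq> 0"
begin

lemma mon_mult: "mon a Q X g b c * mon a Q X g' b' c' = mon a Q X (g + g') (b + b') (c + c')"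
  using nz by (simp add: mon_def power_int_add mult_ac)

lemma mon_nz: "mon a Q X g b c \<noteq> 0"
  using nz by (simp add: mon_def)

lemma mon_inverse: "inverse (mon a Q X g b c) = mon a Q X (- g) (- b) (- c)"
  using nz by (simp add: mon_def power_int_minus)

lemma mon_Qpow: "mon a Q X g b c * Q ^ k = mon a Q X g (b + int k) c"
  using nz by (simp add: mon_def power_int_add mult_ac)

lemma mon_Xpowi: "mon a Q X g b c * X powi k = mon a Q X g b (c + k)"
  using nz by (simp add: mon_def power_int_add mult_ac)

lemma epoch_mon: "epoch p (mon a Q X g b c) Q (int u) = epm p a Q X g b c u"
  by (simp add: epoch_def epm_def Em_def mon_Qpow)

lemma c1: "X powi k = mon a Q X 0 0 k" by (simp add: mon_def)
lemma c2: "Q powi k = mon a Q X 0 k 0" by (simp add: mon_def)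
lemma c3: "a * mon a Q X g b c = mon a Q X (g + 1) b c"
  using nz by (simp add: mon_def power_int_add mult_ac)
lemma c4: "Q * mon a Q X g b c = mon a Q X g (b + 1) c"
  using nz by (simp add: mon_def power_int_add mult_ac)
lemma c6: "a * Q * Z = a * (Q * Z)" by (simp add: mult_ac)
lemma epoch_mon_add: "epoch p (mon a Q X g b c) Q (int u + int v) = epm p a Q X g b c (u + v)"
  using epoch_mon[of p g b c "u + v"] by simp
lemma epoch_mon_diff: "v \<le> u \<Longrightarrow> epoch p (mon a Q X g b c) Q (int u - int v) = epm p a Q X g b c (u - v)"
  using epoch_mon[of p g b c "u - v"] by (simp add: of_nat_diff)

lemmas crules = c1 c2 c3 c4 c6 mon_mult add_0 add_0_right epoch_mon epoch_mon_add Em_def[symmetric]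
end

lemma ct_eq:
  assumes nz: "a \<noteq> 0" "Q \<noteq> 0" "X \<noteq> 0" and L: "lam \<in> Lam n M"
  shows "omega_term p n M a [] Q X lam = ct p n M a Q X lam"
proof -
  have pair: "(\<Prod>i\<in>{1..n}. \<Prod>j\<in>{i<..n}.
        Eth p (X powi (int j - int i) * Q powi (int (lam i) - int (lam j))) / Eth p (X powi (int j - int i))
        * (Eth p (a * X powi (2 - int i - int j) * Q powi (int (lam i) + int (lam j)))
             / Eth p (a * X powi (2 - int i - int j)))
        * (epoch p (a * X powi (3 - int i - int j)) Q (int (lam i) + int (lam j))
           * epoch p (X powi (int j - int i + 1)) Q (int (lam i) - int (lam j)))
        / (epoch p (a * Q * X powi (1 - int i - int j)) Q (int (lam i) + int (lam j))
           * epoch p (Q * X powi (int j - int i - 1)) Q (int (lam i) - int (lam j))))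
      = (\<Prod>i\<in>{1..n}. \<Prod>j\<in>{i<..n}. pp p a Q X i j (lam i) (lam j))"
  proof (intro prod.cong refl)
    fix i j assume i: "i \<in> {1..n}" and j: "j \<in> {i<..n}"
    have le: "lam j \<le> lam i" using LamD(2)[OF L, of i j] i j by auto
    show "Eth p (X powi (int j - int i) * Q powi (int (lam i) - int (lam j))) / Eth p (X powi (int j - int i))
        * (Eth p (a * X powi (2 - int i - int j) * Q powi (int (lam i) + int (lam j)))
             / Eth p (a * X powi (2 - int i - int j)))
        * (epoch p (a * X powi (3 - int i - int j)) Q (int (lam i) + int (lam j))
           * epoch p (X powi (int j - int i + 1)) Q (int (lam i) - int (lam j)))
        / (epoch p (a * Q * X powi (1 - int i - int j)) Q (int (lam i) + int (lam j))
           * epoch p (Q * X powi (int j - int i - 1)) Q (int (lam i) - int (lam j)))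
        = pp p a Q X i j (lam i) (lam j)"
      unfolding pp_def
      by (simp only: crules[OF nz] epoch_mon_diff[OF nz le])
  qed
  have single: "(\<Prod>i\<in>{1..n}.
        Eth p (a * X powi (2 * (1 - int i)) * Q powi (2 * int (lam i))) / Eth p (a * X powi (2 * (1 - int i)))
        * Q powi (int (lam i)) * X powi (2 * (int i - 1) * int (lam i)))
      * (epochP p ((a * X powi (1 - int n)) # [] @ [Q powi (- int M)]) Q X n (\<lambda>i. int (lam i))
        / epochP p ((Q * X powi (int n - 1)) # map (\<lambda>b. a * Q / b) [] @ [a * Q powi (int M + 1)]) Q X n
         (\<lambda>i. int (lam i)))
      = (\<Prod>i\<in>{1..n}. sg p n M a Q X i (lam i))"
  proof -
    have e1: "epochP p ((a * X powi (1 - int n)) # [] @ [Q powi (- int M)]) Q X n (\<lambda>i. int (lam i))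
        = (\<Prod>i\<in>{1..n}. epm p a Q X 1 0 (1 - int n + (1 - int i)) (lam i) * epm p a Q X 0 (- int M) (1 - int i) (lam i))"
      unfolding epochP_def
      by (simp only: crules[OF nz] prod_list.Cons prod_list.Nil list.map append.simps mult_1_right prod.distrib)
    have e2: "epochP p ((Q * X powi (int n - 1)) # map (\<lambda>b. a * Q / b) [] @ [a * Q powi (int M + 1)]) Q X n
         (\<lambda>i. int (lam i))
        = (\<Prod>i\<in>{1..n}. epm p a Q X 0 1 (int n - 1 + (1 - int i)) (lam i) * epm p a Q X 1 (int M + 1) (1 - int i) (lam i))"
      unfolding epochP_def
      by (simp only: crules[OF nz] prod_list.Cons prod_list.Nil list.map append.simps mult_1_right prod.distrib)
    show ?thesis
      unfolding sg_def e1 e2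
      by (simp only: crules[OF nz] prod.distrib[symmetric] prod_dividef[symmetric])
        (simp add: divide_inverse mult_ac)
  qed
  show ?thesis
    unfolding omega_term_def ct_def
    by (subst pair[symmetric], subst single[symmetric]) (simp add: mult_ac)
qed


definition gen :: "complex \<Rightarrow> complex \<Rightarrow> complex \<Rightarrow> complex \<Rightarrow> bool" where
  "gen p a Q X \<longleftrightarrow> (\<forall>g b c. \<bar>g\<bar> \<le> 1 \<longrightarrow> (g \<noteq> 0 \<or> b \<noteq> 0 \<or> c \<noteq> 0) \<longrightarrow> Em p a Q X g b c \<noteq> 0)"

lemma Em_nz: "gen p a Q X \<Longrightarrow> \<bar>g\<bar> \<le> 1 \<Longrightarrow> g \<noteq> 0 \<or> b \<noteq> 0 \<or> c \<noteq> 0 \<Longrightarrow> Em p a Q X g b c \<noteq> 0"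
  unfolding gen_def by blast

lemma Em_nz1: "gen p a Q X \<Longrightarrow> Em p a Q X 1 b c \<noteq> 0"
  using Em_nz by force
lemma Em_nz0b: "gen p a Q X \<Longrightarrow> b \<noteq> 0 \<Longrightarrow> Em p a Q X 0 b c \<noteq> 0"
  using Em_nz by force
lemma Em_nz0c: "gen p a Q X \<Longrightarrow> c \<noteq> 0 \<Longrightarrow> Em p a Q X 0 b c \<noteq> 0"
  using Em_nz by force

lemma epm_nz1: "gen p a Q X \<Longrightarrow> epm p a Q X 1 b c u \<noteq> 0"
  unfolding epm_def using Em_nz1 by (simp add: prod_zero_iff)
lemma epm_nz0c: "gen p a Q X \<Longrightarrow> c \<noteq> 0 \<Longrightarrow> epm p a Q X 0 b c u \<noteq> 0"
  unfolding epm_def using Em_nz0c by (simp add: prod_zero_iff)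
lemma epm_nz0b: "gen p a Q X \<Longrightarrow> b > 0 \<Longrightarrow> epm p a Q X 0 b c u \<noteq> 0"
  unfolding epm_def using Em_nz0b by (simp add: prod_zero_iff)
lemma epm_nz0neg:
  assumes "gen p a Q X" "b + int u \<le> 0" shows "epm p a Q X 0 b c u \<noteq> 0"
proof -
  have "\<forall>k\<in>{..<u}. Em p a Q X 0 (b + int k) c \<noteq> 0"
  proof
    fix k assume "k \<in> {..<u}"
    hence "b + int k \<noteq> 0" using assms(2) by simp
    thus "Em p a Q X 0 (b + int k) c \<noteq> 0" by (rule Em_nz0b[OF assms(1)])
  qed
  thus ?thesis unfolding epm_def by (simp add: prod_zero_iff)
qed

lemma epm_Suc: "epm p a Q X g b c (Suc u) = epm p a Q X g b c u * Em p a Q X g (b + int u) c"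
  unfolding epm_def by simp

definition rS :: "complex \<Rightarrow> nat \<Rightarrow> nat \<Rightarrow> complex \<Rightarrow> complex \<Rightarrow> complex \<Rightarrow> int \<Rightarrow> int \<Rightarrow> complex" where
  "rS p n M a Q X I C =
     Em p a Q X 1 (2 * C) (2 - 2 * I) / Em p a Q X 1 (2 * C - 2) (2 - 2 * I) * mon a Q X 0 1 (2 * I - 2)
     * (Em p a Q X 1 (C - 1) (2 - int n - I) * Em p a Q X 0 (C - 1 - int M) (1 - I))
     / (Em p a Q X 0 C (int n - I) * Em p a Q X 1 (int M + C) (1 - I))"

lemma sg_step:
  assumes nz: "a \<noteq> 0" "Q \<noteq> 0" "X \<noteq> 0" and g: "gen p a Q X" and u: "Suc u \<le> M"
  shows "sg p n M a Q X i (Suc u) = sg p n M a Q X i u * rS p n M a Q X (int i) (int u + 1)"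
proof -
  have n1: "Em p a Q X 1 (2 * int u) (2 * (1 - int i)) \<noteq> 0" by (rule Em_nz1[OF g])
  have n2: "Em p a Q X 1 0 (2 * (1 - int i)) \<noteq> 0" by (rule Em_nz1[OF g])
  have n3: "epm p a Q X 0 1 (int n - 1 + (1 - int i)) u \<noteq> 0" by (rule epm_nz0b[OF g]) simp
  have n4: "epm p a Q X 1 (int M + 1) (1 - int i) u \<noteq> 0" by (rule epm_nz1[OF g])
  have n5: "Em p a Q X 0 (1 + int u) (int n - 1 + (1 - int i)) \<noteq> 0" by (rule Em_nz0b[OF g]) simp
  have n6: "Em p a Q X 1 (int M + 1 + int u) (1 - int i) \<noteq> 0" by (rule Em_nz1[OF g])
  have n7: "epm p a Q X 0 (- int M) (1 - int i) u \<noteq> 0" by (rule epm_nz0neg[OF g]) (use u in simp)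
  have n8: "Em p a Q X 0 (int u - int M) (1 - int i) \<noteq> 0" by (rule Em_nz0b[OF g]) (use u in simp)
  show ?thesis
    unfolding sg_def rS_def epm_Suc
    using n1 n2 n3 n4 n5 n6 n7 n8 mon_nz[OF nz] Em_nz1[OF g] epm_nz1[OF g]
    by (simp add: field_simps mon_mult[OF nz])
qed


definition Rgt :: "complex \<Rightarrow> complex \<Rightarrow> complex \<Rightarrow> complex \<Rightarrow> int \<Rightarrow> int \<Rightarrow> int \<Rightarrow> int \<Rightarrow> complex" where
  "Rgt p a Q X I C J V =
     Em p a Q X 0 (C - V) (J - I) * Em p a Q X 0 (C - 1 - V) (J - I + 1)
     * Em p a Q X 1 (C + V) (2 - I - J) * Em p a Q X 1 (C + V - 1) (3 - I - J)
     / (Em p a Q X 0 (C - 1 - V) (J - I) * Em p a Q X 0 (C - V) (J - I - 1)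
        * Em p a Q X 1 (C + V - 1) (2 - I - J) * Em p a Q X 1 (C + V) (1 - I - J))"

definition Rlt :: "complex \<Rightarrow> complex \<Rightarrow> complex \<Rightarrow> complex \<Rightarrow> int \<Rightarrow> int \<Rightarrow> int \<Rightarrow> int \<Rightarrow> complex" where
  "Rlt p a Q X I C J U =
     Em p a Q X 0 (U - C) (I - J) * Em p a Q X 0 (U - C + 1) (I - J - 1)
     * Em p a Q X 1 (U + C) (2 - I - J) * Em p a Q X 1 (U + C - 1) (3 - I - J)
     / (Em p a Q X 0 (U - C + 1) (I - J) * Em p a Q X 0 (U - C) (I - J + 1)
        * Em p a Q X 1 (U + C - 1) (2 - I - J) * Em p a Q X 1 (U + C) (1 - I - J))"

lemma pp_step_gt:
  assumes nz: "a \<noteq> 0" "Q \<noteq> 0" "X \<noteq> 0" and g: "gen p a Q X" and ij: "i < j" and vu: "v \<le> u"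
  shows "pp p a Q X i j (Suc u) v = pp p a Q X i j u v * Rgt p a Q X (int i) (int u + 1) (int j) (int v)"
proof -
  have e1: "Suc u + v = Suc (u + v)" by simp
  have e2: "Suc u - v = Suc (u - v)" using vu by simp
  have n1: "Em p a Q X 0 (int u - int v) (int j - int i) \<noteq> 0" by (rule Em_nz0c[OF g]) (use ij in simp)
  have n2: "Em p a Q X 0 0 (int j - int i) \<noteq> 0" by (rule Em_nz0c[OF g]) (use ij in simp)
  have n3: "epm p a Q X 0 1 (int j - int i - 1) (u - v) \<noteq> 0" by (rule epm_nz0b[OF g]) simp
  have n4: "Em p a Q X 0 (int u + 1 - 1 - int v) (int j - int i) \<noteq> 0" by (rule Em_nz0c[OF g]) (use ij in simp)
  have n5: "Em p a Q X 0 (int u + 1 - int v) (int j - int i - 1) \<noteq> 0" by (rule Em_nz0b[OF g]) (use vu in simp)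
  have n6: "Em p a Q X 0 (1 + int (u - v)) (int j - int i - 1) \<noteq> 0" by (rule Em_nz0b[OF g]) simp
  show ?thesis
    unfolding pp_def Rgt_def e1 e2 epm_Suc
    using n1 n2 n3 n4 n5 n6 Em_nz1[OF g] epm_nz1[OF g] vu
    by (simp add: field_simps of_nat_diff)
qed

lemma pp_step_lt:
  assumes nz: "a \<noteq> 0" "Q \<noteq> 0" "X \<noteq> 0" and g: "gen p a Q X" and ji: "j < i" and wu: "Suc w \<le> u"
  shows "pp p a Q X j i u (Suc w) = pp p a Q X j i u w * Rlt p a Q X (int i) (int w + 1) (int j) (int u)"
proof -
  define d where "d = u - Suc w"
  have e1: "u + Suc w = Suc (u + w)" by simp
  have e2: "u - w = Suc d" using wu by (simp add: d_def)
  have e3: "u - Suc w = d" by (simp add: d_def)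
  have du: "int d = int u - int w - 1" using wu by (simp add: d_def of_nat_diff)
  have n1: "Em p a Q X 0 (int u - int w) (int i - int j) \<noteq> 0" by (rule Em_nz0c[OF g]) (use ji in simp)
  have n2: "Em p a Q X 0 0 (int i - int j) \<noteq> 0" by (rule Em_nz0c[OF g]) (use ji in simp)
  have n3: "epm p a Q X 0 1 (int i - int j - 1) d \<noteq> 0" by (rule epm_nz0b[OF g]) simp
  have n3': "epm p a Q X 0 0 (int i - int j + 1) d \<noteq> 0" by (rule epm_nz0c[OF g]) (use ji in simp)
  have n4: "Em p a Q X 0 (int u - int w) (int i - int j) \<noteq> 0" by (rule Em_nz0c[OF g]) (use ji in simp)
  have n5: "Em p a Q X 0 (int u - (int w + 1)) (int i - int j + 1) \<noteq> 0" by (rule Em_nz0c[OF g]) (use ji in simp)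
  have n6: "Em p a Q X 0 (1 + int d) (int i - int j - 1) \<noteq> 0" by (rule Em_nz0b[OF g]) simp
  have n7: "Em p a Q X 0 (int u - (int w + 1) + 1) (int i - int j) \<noteq> 0" by (rule Em_nz0c[OF g]) (use ji in simp)
  have n8: "Em p a Q X 0 (int u - (int w + 1)) (int i - int j) \<noteq> 0" by (rule Em_nz0c[OF g]) (use ji in simp)
  show ?thesis
    unfolding pp_def Rlt_def e1 e2 e3 epm_Suc
    using n1 n2 n3 n3' n4 n5 n6 n7 n8 Em_nz1[OF g] epm_nz1[OF g]
    by (simp add: field_simps du)
qed


lemma ct_addcell:
  assumes nz: "a \<noteq> 0" "Q \<noteq> 0" "X \<noteq> 0" and g: "gen p a Q X"
    and i: "i \<in> {1..n}" and li: "lam i = Suc u" and nu: "nu = lam(i := u)"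
    and hgt: "\<And>j. j \<in> {i<..n} \<Longrightarrow> lam j \<le> u"
    and hlt: "\<And>j. j \<in> {1..<i} \<Longrightarrow> Suc u \<le> lam j"
    and uM: "Suc u \<le> M"
  shows "ct p n M a Q X lam = ct p n M a Q X nu *
     (rS p n M a Q X (int i) (int u + 1)
      * (\<Prod>j\<in>{i<..n}. Rgt p a Q X (int i) (int u + 1) (int j) (int (lam j)))
      * (\<Prod>j\<in>{1..<i}. Rlt p a Q X (int i) (int u + 1) (int j) (int (lam j))))"
proof -
  have fin: "finite {1..n}" by simp
  have nui: "nu i = u" and nuj: "\<And>j. j \<noteq> i \<Longrightarrow> nu j = lam j" using nu by auto
  have S: "(\<Prod>k\<in>{1..n}. sg p n M a Q X k (lam k))
      = (\<Prod>k\<in>{1..n}. sg p n M a Q X k (nu k)) * rS p n M a Q X (int i) (int u + 1)"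
  proof -
    have "(\<Prod>k\<in>{1..n}. sg p n M a Q X k (lam k)) = sg p n M a Q X i (lam i) * (\<Prod>k\<in>{1..n}-{i}. sg p n M a Q X k (lam k))"
      by (rule prod.remove[OF fin i])
    also have "(\<Prod>k\<in>{1..n}-{i}. sg p n M a Q X k (lam k)) = (\<Prod>k\<in>{1..n}-{i}. sg p n M a Q X k (nu k))"
      by (rule prod.cong) (auto simp: nuj)
    also have "sg p n M a Q X i (lam i) = sg p n M a Q X i (nu i) * rS p n M a Q X (int i) (int u + 1)"
      unfolding li nui by (rule sg_step[OF nz g uM])
    also have "sg p n M a Q X i (nu i) * rS p n M a Q X (int i) (int u + 1) * (\<Prod>k\<in>{1..n}-{i}. sg p n M a Q X k (nu k))
        = (sg p n M a Q X i (nu i) * (\<Prod>k\<in>{1..n}-{i}. sg p n M a Q X k (nu k))) * rS p n M a Q X (int i) (int u + 1)"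
      by (simp add: mult_ac)
    also have "sg p n M a Q X i (nu i) * (\<Prod>k\<in>{1..n}-{i}. sg p n M a Q X k (nu k)) = (\<Prod>k\<in>{1..n}. sg p n M a Q X k (nu k))"
      by (rule prod.remove[OF fin i, symmetric])
    finally show ?thesis .
  qed
  define G where "G lm k = (\<Prod>l\<in>{k<..n}. pp p a Q X k l (lm k) (lm l))" for lm k
  define RG where "RG = (\<Prod>j\<in>{i<..n}. Rgt p a Q X (int i) (int u + 1) (int j) (int (lam j)))"
  define RL where "RL k = (if k < i then Rlt p a Q X (int i) (int u + 1) (int k) (int (lam k)) else 1)" for k
  have Gi: "G lam i = G nu i * RG"
  proof -
    have "G lam i = (\<Prod>l\<in>{i<..n}. pp p a Q X i l u (lam l) * Rgt p a Q X (int i) (int u + 1) (int l) (int (lam l)))"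
      unfolding G_def li
    proof (rule prod.cong[OF refl])
      fix l assume l: "l \<in> {i<..n}"
      show "pp p a Q X i l (Suc u) (lam l) = pp p a Q X i l u (lam l) * Rgt p a Q X (int i) (int u + 1) (int l) (int (lam l))"
        using l hgt[OF l] by (intro pp_step_gt[OF nz g]) auto
    qed
    also have "\<dots> = G nu i * RG"
      unfolding G_def RG_def prod.distrib nui
      by (intro arg_cong2[where f="(*)"] prod.cong refl) (auto simp: nuj)
    finally show ?thesis .
  qed
  have Gk: "G lam k = G nu k * RL k" if k: "k \<in> {1..n} - {i}" for k
  proof (cases "k < i")
    case False
    hence "i < k" using k by auto
    hence "G lam k = G nu k" unfolding G_def by (intro prod.cong refl) (auto simp: nuj)
    thus ?thesis using False by (simp add: RL_def)
  next
    case True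
    have fk: "finite {k<..n}" by simp
    have ik: "i \<in> {k<..n}" using True i by auto
    have lk: "Suc u \<le> lam k" using hlt[of k] True k by auto
    have "G lam k = pp p a Q X k i (lam k) (lam i) * (\<Prod>l\<in>{k<..n}-{i}. pp p a Q X k l (lam k) (lam l))"
      unfolding G_def by (rule prod.remove[OF fk ik])
    also have "pp p a Q X k i (lam k) (lam i) = pp p a Q X k i (lam k) u * Rlt p a Q X (int i) (int u + 1) (int k) (int (lam k))"
      unfolding li by (rule pp_step_lt[OF nz g True lk])
    also have "(\<Prod>l\<in>{k<..n}-{i}. pp p a Q X k l (lam k) (lam l)) = (\<Prod>l\<in>{k<..n}-{i}. pp p a Q X k l (nu k) (nu l))"
      using True by (intro prod.cong refl) (auto simp: nuj)
    also have "pp p a Q X k i (lam k) u * Rlt p a Q X (int i) (int u + 1) (int k) (int (lam k)) * (\<Prod>l\<in>{k<..n}-{i}. pp p a Q X k l (nu k) (nu l))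
        = (pp p a Q X k i (nu k) (nu i) * (\<Prod>l\<in>{k<..n}-{i}. pp p a Q X k l (nu k) (nu l))) * RL k"
      using True by (simp add: RL_def nui nuj mult_ac)
    also have "pp p a Q X k i (nu k) (nu i) * (\<Prod>l\<in>{k<..n}-{i}. pp p a Q X k l (nu k) (nu l)) = G nu k"
      unfolding G_def by (rule prod.remove[OF fk ik, symmetric])
    finally show ?thesis .
  qed
  have RLp: "(\<Prod>k\<in>{1..n}-{i}. RL k) = (\<Prod>j\<in>{1..<i}. Rlt p a Q X (int i) (int u + 1) (int j) (int (lam j)))"
  proof -
    have "(\<Prod>k\<in>{1..n}-{i}. RL k) = (\<Prod>k\<in>({1..n}-{i}) \<inter> {k. k < i}. Rlt p a Q X (int i) (int u + 1) (int k) (int (lam k)))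
        * (\<Prod>k\<in>({1..n}-{i}) \<inter> - {k. k < i}. 1)"
      unfolding RL_def by (rule prod.If_cases) simp
    also have "({1..n}-{i}) \<inter> {k. k < i} = {1..<i}" using i by auto
    finally show ?thesis by simp
  qed
  have P: "(\<Prod>k\<in>{1..n}. G lam k) = (\<Prod>k\<in>{1..n}. G nu k) * RG * (\<Prod>j\<in>{1..<i}. Rlt p a Q X (int i) (int u + 1) (int j) (int (lam j)))"
  proof -
    have "(\<Prod>k\<in>{1..n}. G lam k) = G lam i * (\<Prod>k\<in>{1..n}-{i}. G lam k)" by (rule prod.remove[OF fin i])
    also have "(\<Prod>k\<in>{1..n}-{i}. G lam k) = (\<Prod>k\<in>{1..n}-{i}. G nu k) * (\<Prod>k\<in>{1..n}-{i}. RL k)"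
      by (subst prod.distrib[symmetric]) (rule prod.cong, auto simp: Gk)
    also have "G lam i * ((\<Prod>k\<in>{1..n}-{i}. G nu k) * (\<Prod>k\<in>{1..n}-{i}. RL k))
       = (G nu i * (\<Prod>k\<in>{1..n}-{i}. G nu k)) * RG * (\<Prod>k\<in>{1..n}-{i}. RL k)"
      by (simp add: Gi mult_ac)
    also have "G nu i * (\<Prod>k\<in>{1..n}-{i}. G nu k) = (\<Prod>k\<in>{1..n}. G nu k)" by (rule prod.remove[OF fin i, symmetric])
    finally show ?thesis using RLp by simp
  qed
  show ?thesis
    unfolding ct_def S using P unfolding G_def RG_def by (simp add: mult_ac)
qed

context
  fixes a Q X :: complex
  assumes nz: "a \<noteq> 0" "Q \<noteq> 0" "X \<noteq> 0"
begin

lemma mon_conv: "mon (a * Q * X) (inverse X) (inverse Q) g b c = mon a Q X g (g - c) (g - b)"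
  using nz by (simp add: mon_def power_int_mult_distrib power_int_diff power_int_inverse field_simps)

lemma Em_conv: "Em p (a * Q * X) (inverse X) (inverse Q) g b c = Em p a Q X g (g - c) (g - b)"
  by (simp add: Em_def mon_conv)

lemma Em_inv:
  assumes p: "norm p < 1"
  shows "Em p a Q X g b c = - mon a Q X g b c * Em p a Q X (- g) (- b) (- c)"
proof -
  have "Em p a Q X g b c = Eth p (inverse (mon a Q X (- g) (- b) (- c)))"
    by (simp add: Em_def mon_inverse[OF nz])
  also have "\<dots> = - inverse (mon a Q X (- g) (- b) (- c)) * Eth p (mon a Q X (- g) (- b) (- c))"
    by (rule Eth_inv[OF p mon_nz[OF nz]])
  finally show ?thesis by (simp add: Em_def mon_inverse[OF nz])
qed

lemma Em_conv0:
  assumes p: "norm p < 1"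
  shows "Em p (a * Q * X) (inverse X) (inverse Q) 0 b c = - mon a Q X 0 (- c) (- b) * Em p a Q X 0 c b"
  using Em_inv[OF p, of 0 "- c" "- b"] by (simp add: Em_conv)

lemma Em_conv1: "Em p (a * Q * X) (inverse X) (inverse Q) 1 b c = Em p a Q X 1 (1 - c) (1 - b)"
  by (simp add: Em_conv)

lemma mon_mult_left: "mon a Q X g b c * (mon a Q X g' b' c' * z) = mon a Q X (g + g') (b + b') (c + c') * z"
  by (simp add: mon_mult[OF nz, symmetric] mult.assoc)

lemma gen_conv: "gen p a Q X \<Longrightarrow> gen p (a * Q * X) (inverse X) (inverse Q)"
  unfolding gen_def Em_conv by force

end

lemma Em_nz0: "gen p a Q X \<Longrightarrow> b \<noteq> 0 \<or> c \<noteq> 0 \<Longrightarrow> Em p a Q X 0 b c \<noteq> 0"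
  using Em_nz by force

lemma noncell:
  fixes I C J D :: int
  assumes nz: "a \<noteq> 0" "Q \<noteq> 0" "X \<noteq> 0" and p: "norm p < 1" and g: "gen p a Q X"
    and J: "1 \<le> J" "J < I" and D: "C < D" "1 \<le> C"
  shows "Rlt p a Q X I C J (D - 1) / Rlt p a Q X I C J D
       = Rgt p (a * Q * X) (inverse X) (inverse Q) C I D (J - 1) / Rgt p (a * Q * X) (inverse X) (inverse Q) C I D J"
proof -
  note nzs = Em_nz1[OF g] Em_nz0[OF g] mon_nz[OF nz]
  show ?thesis
    unfolding Rlt_def Rgt_def Em_conv0[OF nz p] Em_conv1[OF nz]
    using J D
    apply (simp add: nzs field_simps mon_mult[OF nz] mon_mult_left[OF nz])
    done
qed


lemma telescope_down:
  fixes f :: "nat \<Rightarrow> complex"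
  assumes "u \<le> N" and "\<And>d. u \<le> d \<Longrightarrow> d \<le> N \<Longrightarrow> f d \<noteq> 0"
  shows "f u = f N * (\<Prod>d\<in>{u<..N}. f (d - 1) / f d)"
  using assms
proof (induction N)
  case 0 thus ?case by simp
next
  case (Suc N)
  show ?case
  proof (cases "u = Suc N")
    case True thus ?thesis by simp
  next
    case False
    hence uN: "u \<le> N" using Suc.prems by simp
    have IH: "f u = f N * (\<Prod>d\<in>{u<..N}. f (d - 1) / f d)" using Suc.IH[OF uN] Suc.prems by simp
    have "{u<..Suc N} = insert (Suc N) {u<..N}" using uN by auto
    hence "(\<Prod>d\<in>{u<..Suc N}. f (d - 1) / f d) = f N / f (Suc N) * (\<Prod>d\<in>{u<..N}. f (d - 1) / f d)"
      by simp
    moreover have "f (Suc N) \<noteq> 0" using Suc.prems by simp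
    ultimately show ?thesis using IH by simp
  qed
qed

lemma GTprod:
  fixes C V :: int
  assumes nz: "a \<noteq> 0" "Q \<noteq> 0" "X \<noteq> 0" and g: "gen p a Q X" and VC: "V < C" and iN: "i \<le> n"
  shows "(\<Prod>j\<in>{i<..n}. Rgt p a Q X (int i) C (int j) V)
    = Em p a Q X 0 (C - V) (int n - int i) / Em p a Q X 0 (C - V) 0
      * (Em p a Q X 0 (C - 1 - V) (int n - int i + 1) / Em p a Q X 0 (C - 1 - V) 1)
      * (Em p a Q X 1 (C + V) (1 - 2 * int i) / Em p a Q X 1 (C + V) (1 - int i - int n))
      * (Em p a Q X 1 (C + V - 1) (2 - 2 * int i) / Em p a Q X 1 (C + V - 1) (2 - int i - int n))"
  using iN
proof (induction n)
  case 0
  hence "i = 0" by simp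
  thus ?case using VC by (simp add: Em_nz1[OF g] Em_nz0[OF g])
next
  case (Suc n)
  note nzs = Em_nz1[OF g] Em_nz0[OF g]
  show ?case
  proof (cases "i = Suc n")
    case True thus ?thesis using VC by (simp add: nzs algebra_simps)
  next
    case False
    hence iN: "i \<le> n" using Suc.prems by simp
    have "{i<..Suc n} = insert (Suc n) {i<..n}" using iN by auto
    hence "(\<Prod>j\<in>{i<..Suc n}. Rgt p a Q X (int i) C (int j) V)
       = Rgt p a Q X (int i) C (int (Suc n)) V * (\<Prod>j\<in>{i<..n}. Rgt p a Q X (int i) C (int j) V)" by simp
    also note Suc.IH[OF iN]
    finally show ?thesis unfolding Rgt_def using VC iN
      by (simp add: nzs field_simps)
  qed
qed

lemma LTprod:
  fixes C U :: int
  assumes nz: "a \<noteq> 0" "Q \<noteq> 0" "X \<noteq> 0" and g: "gen p a Q X" and CU: "C \<le> U" and t: "1 \<le> t" "t \<le> i"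
  shows "(\<Prod>j\<in>{1..<t}. Rlt p a Q X (int i) C (int j) U)
    = Em p a Q X 0 (U - C) (int i - int t + 1) / Em p a Q X 0 (U - C) (int i)
      * (Em p a Q X 0 (U - C + 1) (int i - int t) / Em p a Q X 0 (U - C + 1) (int i - 1))
      * (Em p a Q X 1 (U + C) (1 - int i) / Em p a Q X 1 (U + C) (2 - int i - int t))
      * (Em p a Q X 1 (U + C - 1) (2 - int i) / Em p a Q X 1 (U + C - 1) (3 - int i - int t))"
  using t
proof (induction t)
  case 0 thus ?case by simp
next
  case (Suc t)
  note nzs = Em_nz1[OF g] Em_nz0[OF g]
  show ?case
  proof (cases "t = 0")
    case True thus ?thesis using CU Suc.prems by (simp add: nzs)
  next
    case False
    hence t1: "1 \<le> t" "t \<le> i" using Suc.prems by auto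
    have "{1..<Suc t} = insert t {1..<t}" using t1 by auto
    hence "(\<Prod>j\<in>{1..<Suc t}. Rlt p a Q X (int i) C (int j) U)
       = Rlt p a Q X (int i) C (int t) U * (\<Prod>j\<in>{1..<t}. Rlt p a Q X (int i) C (int j) U)" by simp
    also note Suc.IH[OF t1]
    finally show ?thesis unfolding Rlt_def using CU t1 Suc.prems
      by (simp add: nzs field_simps)
  qed
qed


lemma boundary:
  fixes i c n N :: nat
  assumes nz: "a \<noteq> 0" "Q \<noteq> 0" "X \<noteq> 0" and p: "norm p < 1" and g: "gen p a Q X"
    and i: "1 \<le> i" "i \<le> n" and c: "1 \<le> c" "c \<le> N"
  shows "rS p n N a Q X (int i) (int c) * (\<Prod>j\<in>{i<..n}. Rgt p a Q X (int i) (int c) (int j) 0)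
           * (\<Prod>j\<in>{1..<i}. Rlt p a Q X (int i) (int c) (int j) (int N))
       = rS p N n (a * Q * X) (inverse X) (inverse Q) (int c) (int i)
           * (\<Prod>k\<in>{1..<c}. Rlt p (a * Q * X) (inverse X) (inverse Q) (int c) (int i) (int k) (int i))
           * (\<Prod>k\<in>{c<..N}. Rgt p (a * Q * X) (inverse X) (inverse Q) (int c) (int i) (int k) (int i - 1))"
proof -
  have nz': "a * Q * X \<noteq> 0" "inverse X \<noteq> 0" "inverse Q \<noteq> 0" using nz by auto
  have g': "gen p (a * Q * X) (inverse X) (inverse Q)" by (rule gen_conv[OF nz g])
  note nzs = Em_nz1[OF g] Em_nz0[OF g] mon_nz[OF nz]
  have h1: "0 < int c" and h2: "int c \<le> int N" and h3: "int i - 1 < int i" and h4: "int i \<le> int i"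
    using c by auto
  have f1: "Em p a Q X 0 (1 - int c) (int i - (1 + int n)) = - mon a Q X 0 (1 - int c) (int i - (1 + int n)) * Em p a Q X 0 (int c - 1) (1 + int n - int i)"
    using Em_inv[OF nz p, of 0 "1 - int c" "int i - (1 + int n)"] by simp
  have f2: "Em p a Q X 0 (1 + int N - int c) (int i - 1) = - mon a Q X 0 (1 + int N - int c) (int i - 1) * Em p a Q X 0 (int c - (1 + int N)) (1 - int i)"
    using Em_inv[OF nz p, of 0 "1 + int N - int c" "int i - 1"] by simp
  show ?thesis
    unfolding GTprod[OF nz g h1 i(2)] LTprod[OF nz g h2 i(1) order.refl]
      GTprod[OF nz' g' h3 c(2)] LTprod[OF nz' g' h4 c(1) order.refl]
    using i c
    unfolding rS_def Em_conv0[OF nz p] Em_conv1[OF nz] mon_conv[OF nz]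
    apply (simp add: nzs field_simps mon_mult[OF nz] mon_mult_left[OF nz])
    apply (simp add: f1 f2 nzs mon_mult[OF nz] mon_mult_left[OF nz] algebra_simps)
    done
qed

lemma swap_noncells:
  assumes L: "lam \<in> Lam n N" and i0: "i0 \<le> n" and hc: "\<And>j. j \<in> {1..<i0} \<Longrightarrow> c \<le> lam j"
  shows "(\<Prod>j\<in>{1..<i0}. \<Prod>d\<in>{lam j<..N}. F j d)
       = (\<Prod>k\<in>{c<..N}. \<Prod>m\<in>{conjp n N lam k<..i0 - 1}. F m k)"
proof -
  let ?A = "Sigma {1..<i0} (\<lambda>j. {lam j<..N})"
  let ?B = "Sigma {c<..N} (\<lambda>k. {conjp n N lam k<..i0 - 1})"
  have "(\<Prod>j\<in>{1..<i0}. \<Prod>d\<in>{lam j<..N}. F j d) = (\<Prod>(j,d)\<in>?A. F j d)"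
    by (rule prod.Sigma) auto
  also have "\<dots> = (\<Prod>(k,m)\<in>?B. F m k)"
  proof (rule prod.reindex_bij_witness[where i="\<lambda>(k,m). (m,k)" and j="\<lambda>(j,d). (d,j)"])
    fix x assume x: "x \<in> ?A"
    obtain j d where xjd: "x = (j,d)" by (cases x)
    with x have j: "1 \<le> j" "j < i0" and d: "lam j < d" "d \<le> N" by auto
    have "c < d" using hc[of j] j d by force
    have "\<not> (d \<le> lam j)" using d by simp
    hence "\<not> (j \<le> conjp n N lam d)" using conj_cell[OF L, of j d] j d i0 by auto
    thus "(\<lambda>(j,d). (d,j)) x \<in> ?B" using xjd \<open>c < d\<close> d j by auto
    show "(\<lambda>(k,m). (m,k)) ((\<lambda>(j,d). (d,j)) x) = x" using xjd by simp
    show "(case (\<lambda>(j,d). (d,j)) x of (k,m) \<Rightarrow> F m k) = (case x of (j,d) \<Rightarrow> F j d)" using xjd by simp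
  next
    fix y assume y: "y \<in> ?B"
    obtain k m where ykm: "y = (k,m)" by (cases y)
    with y have k: "c < k" "k \<le> N" and m: "conjp n N lam k < m" "m \<le> i0 - 1" by auto
    have m1: "1 \<le> m" "m < i0" using m by auto
    have "\<not> (m \<le> conjp n N lam k)" using m by simp
    hence "\<not> (k \<le> lam m)" using conj_cell[OF L, of m k] m1 k i0 by auto
    thus "(\<lambda>(j,d). (d,j)) y \<in> ?A" using ykm m1 k by auto
    show "(\<lambda>(j,d). (d,j)) ((\<lambda>(k,m). (m,k)) y) = y" using ykm by simp
  qed
  also have "\<dots> = (\<Prod>k\<in>{c<..N}. \<Prod>m\<in>{conjp n N lam k<..i0 - 1}. F m k)"
    by (rule prod.Sigma[symmetric]) auto
  finally show ?thesis .
qed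

lemma ct_zero:
  assumes g: "gen p a Q X"
  shows "ct p n M a Q X (\<lambda>_. 0) = 1"
proof -
  have "sg p n M a Q X i 0 = 1" for i
    unfolding sg_def epm_def using Em_nz1[OF g] by (simp add: mon_def)
  moreover have "pp p a Q X i j 0 0 = 1" if "i < j" for i j
    unfolding pp_def epm_def using Em_nz1[OF g] Em_nz0[OF g] that by simp
  ultimately show ?thesis unfolding ct_def by simp
qed


lemma Rlt_nz:
  assumes g: "gen p a Q X" and "J < I" and "C \<le> U"
  shows "Rlt p a Q X I C J U \<noteq> 0"
  unfolding Rlt_def using assms by (simp add: Em_nz1[OF g] Em_nz0[OF g])

lemma Rgt_nz:
  assumes g: "gen p a Q X" and "I < J" and "V < C"
  shows "Rgt p a Q X I C J V \<noteq> 0"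
  unfolding Rgt_def using assms by (simp add: Em_nz1[OF g] Em_nz0[OF g])

lemma last_cell:
  assumes L: "lam \<in> Lam n N" and ne: "\<exists>i\<in>{1..n}. 0 < lam i"
  obtains i0 u where "i0 \<in> {1..n}" "lam i0 = Suc u" "\<And>j. j \<in> {i0<..n} \<Longrightarrow> lam j = 0"
    "\<And>j. j \<in> {1..<i0} \<Longrightarrow> Suc u \<le> lam j" "Suc u \<le> N"
proof -
  define S where "S = {i \<in> {1..n}. 0 < lam i}"
  have fin: "finite S" and Sne: "S \<noteq> {}" using ne by (auto simp: S_def)
  define i0 where "i0 = Max S"
  have i0S: "i0 \<in> S" using Max_in[OF fin Sne] by (simp add: i0_def)
  then obtain u where u: "lam i0 = Suc u" by (auto simp: S_def dest: gr0_implies_Suc)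
  have i0r: "i0 \<in> {1..n}" using i0S by (simp add: S_def)
  show ?thesis
  proof (rule that[OF i0r u])
    fix j assume j: "j \<in> {i0<..n}"
    show "lam j = 0"
    proof (rule ccontr)
      assume "lam j \<noteq> 0"
      hence "j \<in> S" using j i0r by (auto simp: S_def)
      hence "j \<le> i0" using Max_ge[OF fin] by (simp add: i0_def)
      thus False using j by simp
    qed
  next
    fix j assume j: "j \<in> {1..<i0}"
    thus "Suc u \<le> lam j" using LamD(2)[OF L, of j i0] i0r u by auto
  next
    show "Suc u \<le> N" using LamD(1)[OF L, of i0] u by simp
  qed
qed

lemma nu_Lam:
  assumes L: "lam \<in> Lam n N" and i0: "i0 \<in> {1..n}" and u: "lam i0 = Suc u"
    and z: "\<And>j. j \<in> {i0<..n} \<Longrightarrow> lam j = 0"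
  shows "lam(i0 := u) \<in> Lam n N"
  unfolding Lam_def
proof (intro CollectI conjI allI impI)
  fix i show "(lam(i0 := u)) i \<le> N" using LamD(1)[OF L, of i] LamD(1)[OF L, of i0] u by auto
next
  fix i j assume ij: "1 \<le> i" "i \<le> j" "j \<le> n"
  show "(lam(i0 := u)) j \<le> (lam(i0 := u)) i"
  proof (cases "j = i0")
    case True
    thus ?thesis using LamD(2)[OF L, of i i0] ij u by auto
  next
    case False
    show ?thesis
    proof (cases "i = i0")
      case True
      hence "j \<in> {i0<..n}" using ij \<open>j \<noteq> i0\<close> by auto
      thus ?thesis using z True \<open>j \<noteq> i0\<close> by simp
    next
      case False
      thus ?thesis using LamD(2)[OF L ij] \<open>j \<noteq> i0\<close> by simp
    qed
  qed
next
  fix i assume "i \<notin> {1..n}"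
  thus "(lam(i0 := u)) i = 0" using LamD(3)[OF L] i0 by auto
qed

lemma nu_sum:
  fixes lam :: "nat \<Rightarrow> nat"
  assumes i0: "i0 \<in> {1..n}" and u: "lam i0 = Suc u"
  shows "sum (lam(i0 := u)) {1..n} < sum lam {1..n}"
proof -
  have "sum lam {1..n} = lam i0 + sum lam ({1..n} - {i0})" by (rule sum.remove) (use i0 in auto)
  moreover have "sum (lam(i0 := u)) {1..n} = (lam(i0 := u)) i0 + sum (lam(i0 := u)) ({1..n} - {i0})"
    by (rule sum.remove) (use i0 in auto)
  moreover have "sum (lam(i0 := u)) ({1..n} - {i0}) = sum lam ({1..n} - {i0})" by (rule sum.cong) auto
  ultimately show ?thesis using u by simp
qed

lemma conj_last_a:
  assumes L: "lam \<in> Lam n N" and i0: "i0 \<in> {1..n}" and u: "lam i0 = Suc u"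
    and z: "\<And>j. j \<in> {i0<..n} \<Longrightarrow> lam j = 0" and uN: "Suc u \<le> N" and k: "k \<in> {1..Suc u}"
  shows "conjp n N lam k = i0"
proof -
  have "i0 \<le> conjp n N lam k" using conj_cell[OF L, of i0 k] i0 k u uN by auto
  moreover have "\<not> (Suc i0 \<le> conjp n N lam k)"
  proof
    assume a: "Suc i0 \<le> conjp n N lam k"
    hence "Suc i0 \<le> n" using conjp_le[of n N lam k] by simp
    hence "k \<le> lam (Suc i0)" using conj_cell[OF L, of "Suc i0" k] a k uN by auto
    moreover have "lam (Suc i0) = 0" using z[of "Suc i0"] \<open>Suc i0 \<le> n\<close> by simp
    ultimately show False using k by simp
  qed
  ultimately show ?thesis by simp
qed

lemma conj_last_b:
  assumes L: "lam \<in> Lam n N" and i0: "i0 \<in> {1..n}" and u: "lam i0 = Suc u" and k: "k \<in> {Suc u<..N}"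
  shows "conjp n N lam k < i0"
proof (rule ccontr)
  assume "\<not> conjp n N lam k < i0"
  hence "k \<le> lam i0" using conj_cell[OF L, of i0 k] i0 k by auto
  thus False using k u by simp
qed

lemma conj_last_c:
  assumes L: "lam \<in> Lam n N" and i0: "i0 \<in> {1..n}" and u: "lam i0 = Suc u"
    and z: "\<And>j. j \<in> {i0<..n} \<Longrightarrow> lam j = 0" and uN: "Suc u \<le> N"
  shows "conjp n N (lam(i0 := u)) = (conjp n N lam)(Suc u := i0 - 1)"
proof
  fix k
  show "conjp n N (lam(i0 := u)) k = ((conjp n N lam)(Suc u := i0 - 1)) k"
  proof (cases "k \<in> {1..N}")
    case False
    hence "k \<noteq> Suc u" using uN by auto
    moreover have "conjp n N (lam(i0 := u)) k = 0" unfolding conjp_def by (rule if_not_P[OF False])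
    moreover have "conjp n N lam k = 0" unfolding conjp_def by (rule if_not_P[OF False])
    ultimately show ?thesis by simp
  next
    case True
    show ?thesis
    proof (cases "k = Suc u")
      case False
      have e: "{i \<in> {1..n}. k \<le> (lam(i0 := u)) i} = {i \<in> {1..n}. k \<le> lam i}"
        using False u by auto
      have "conjp n N (lam(i0 := u)) k = card {i \<in> {1..n}. k \<le> (lam(i0 := u)) i}"
        unfolding conjp_def by (rule if_P[OF True])
      also have "\<dots> = conjp n N lam k" unfolding e conjp_def by (rule if_P[OF True, symmetric])
      finally show ?thesis using False by simp
    next
      case kc: True
      have e: "{i \<in> {1..n}. k \<le> (lam(i0 := u)) i} = {i \<in> {1..n}. k \<le> lam i} - {i0}"
        using kc u by auto
      have "i0 \<in> {i \<in> {1..n}. k \<le> lam i}" using kc u i0 by auto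
      hence "card ({i \<in> {1..n}. k \<le> lam i} - {i0}) = card {i \<in> {1..n}. k \<le> lam i} - 1"
        by (intro card_Diff_singleton) auto
      moreover have "card {i \<in> {1..n}. k \<le> lam i} = conjp n N lam k"
        unfolding conjp_def by (rule if_P[OF True, symmetric])
      moreover have "conjp n N lam k = i0" using conj_last_a[OF L i0 u z uN, of k] kc by simp
      moreover have "conjp n N (lam(i0 := u)) k = card {i \<in> {1..n}. k \<le> (lam(i0 := u)) i}"
        unfolding conjp_def by (rule if_P[OF True])
      ultimately show ?thesis using kc e by simp
    qed
  qed
qed


theorem core_generic:
  assumes nz: "a \<noteq> 0" "Q \<noteq> 0" "X \<noteq> 0" and p: "norm p < 1" and g: "gen p a Q X"
  shows "lam \<in> Lam n N \<Longrightarrow> ct p n N a Q X lam = ct p N n (a * Q * X) (inverse X) (inverse Q) (conjp n N lam)"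
proof (induction "sum lam {1..n}" arbitrary: lam rule: less_induct)
  case less
  note L = less.prems
  have nz': "a * Q * X \<noteq> 0" "inverse X \<noteq> 0" "inverse Q \<noteq> 0" using nz by auto
  have g': "gen p (a * Q * X) (inverse X) (inverse Q)" by (rule gen_conv[OF nz g])
  show ?case
  proof (cases "\<exists>i\<in>{1..n}. 0 < lam i")
    case False
    have l0: "lam = (\<lambda>_. 0)"
    proof
      fix i show "lam i = 0" using False LamD(3)[OF L, of i] by (cases "i \<in> {1..n}") auto
    qed
    have c0: "conjp n N lam = (\<lambda>_. 0)"
    proof
      fix k
      show "conjp n N lam k = 0"
        unfolding conjp_def l0 by auto
    qed
    show ?thesis unfolding c0 by (subst l0) (simp add: ct_zero[OF g] ct_zero[OF g'])
  next
    case True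
    obtain i0 u where i0: "i0 \<in> {1..n}" and u: "lam i0 = Suc u"
      and z: "\<And>j. j \<in> {i0<..n} \<Longrightarrow> lam j = 0" and hlt: "\<And>j. j \<in> {1..<i0} \<Longrightarrow> Suc u \<le> lam j"
      and uN: "Suc u \<le> N"
      using last_cell[OF L True] by blast
    define c where "c = Suc u"
    define nu where "nu = lam(i0 := u)"
    define mu where "mu = conjp n N lam"
    have nuL: "nu \<in> Lam n N" unfolding nu_def by (rule nu_Lam[OF L i0 u z])
    have IH: "ct p n N a Q X nu = ct p N n (a * Q * X) (inverse X) (inverse Q) (conjp n N nu)"
    proof (rule less.hyps[OF _ nuL])
      have "sum (lam(i0 := u)) {1..n} < sum lam {1..n}" by (rule nu_sum) (rule i0, rule u)
      thus "sum nu {1..n} < sum lam {1..n}" by (simp add: nu_def)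
    qed
    have cnu: "conjp n N nu = mu(c := i0 - 1)"
      unfolding nu_def mu_def c_def using conj_last_c[OF L i0 u z uN] by simp
    have i01: "1 \<le> i0" "i0 \<le> n" using i0 by auto
    have c1: "1 \<le> c" "c \<le> N" using uN by (auto simp: c_def)
    have mc: "mu c = Suc (i0 - 1)" using conj_last_a[OF L i0 u z uN, of c] c1 i01 by (simp add: mu_def c_def)
    have mlt: "\<And>k. k \<in> {1..<c} \<Longrightarrow> mu k = i0" using conj_last_a[OF L i0 u z uN] by (auto simp: mu_def c_def)
    have mgt: "\<And>k. k \<in> {c<..N} \<Longrightarrow> mu k < i0" using conj_last_b[OF L i0 u] by (auto simp: mu_def c_def)
    have A: "ct p n N a Q X lam = ct p n N a Q X nu *
     (rS p n N a Q X (int i0) (int u + 1)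
      * (\<Prod>j\<in>{i0<..n}. Rgt p a Q X (int i0) (int u + 1) (int j) (int (lam j)))
      * (\<Prod>j\<in>{1..<i0}. Rlt p a Q X (int i0) (int u + 1) (int j) (int (lam j))))"
      by (rule ct_addcell[OF nz g i0 u nu_def _ hlt uN]) (simp add: z)
    have B: "ct p N n (a * Q * X) (inverse X) (inverse Q) mu = ct p N n (a * Q * X) (inverse X) (inverse Q) (conjp n N nu) *
     (rS p N n (a * Q * X) (inverse X) (inverse Q) (int c) (int (i0 - 1) + 1)
      * (\<Prod>k\<in>{c<..N}. Rgt p (a * Q * X) (inverse X) (inverse Q) (int c) (int (i0 - 1) + 1) (int k) (int (mu k)))
      * (\<Prod>k\<in>{1..<c}. Rlt p (a * Q * X) (inverse X) (inverse Q) (int c) (int (i0 - 1) + 1) (int k) (int (mu k))))"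
    proof (rule ct_addcell[OF nz' g' _ mc cnu])
      show "c \<in> {1..N}" using c1 by simp
      show "\<And>k. k \<in> {c<..N} \<Longrightarrow> mu k \<le> i0 - 1" using mgt by fastforce
      show "\<And>k. k \<in> {1..<c} \<Longrightarrow> Suc (i0 - 1) \<le> mu k" using mlt i01 by simp
      show "Suc (i0 - 1) \<le> n" using i01 by simp
    qed
    have eI: "int (i0 - 1) + 1 = int i0" "int u + 1 = int c" using i01 by (auto simp: c_def)
    define I where "I = int i0"
    define C where "C = int c"
    define FL where "FL j d = Rlt p a Q X I C (int j) (int (d - 1)) / Rlt p a Q X I C (int j) (int d)" for j d
    define FR where "FR k m = Rgt p (a * Q * X) (inverse X) (inverse Q) C I (int k) (int (m - 1))
       / Rgt p (a * Q * X) (inverse X) (inverse Q) C I (int k) (int m)" for k m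
    have s1: "(\<Prod>j\<in>{i0<..n}. Rgt p a Q X I C (int j) (int (lam j))) = (\<Prod>j\<in>{i0<..n}. Rgt p a Q X I C (int j) 0)"
      by (rule prod.cong) (auto simp: z)
    have s2: "(\<Prod>j\<in>{1..<i0}. Rlt p a Q X I C (int j) (int (lam j)))
        = (\<Prod>j\<in>{1..<i0}. Rlt p a Q X I C (int j) (int N)) * (\<Prod>j\<in>{1..<i0}. \<Prod>d\<in>{lam j<..N}. FL j d)"
    proof (subst prod.distrib[symmetric], rule prod.cong[OF refl])
      fix j assume j: "j \<in> {1..<i0}"
      have "Rlt p a Q X I C (int j) (int (lam j)) = Rlt p a Q X I C (int j) (int N) * (\<Prod>d\<in>{lam j<..N}. Rlt p a Q X I C (int j) (int (d - 1)) / Rlt p a Q X I C (int j) (int d))"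
      proof (rule telescope_down[where f="\<lambda>d. Rlt p a Q X I C (int j) (int d)"])
        show "lam j \<le> N" by (rule LamD(1)[OF L])
        fix d assume "lam j \<le> d" "d \<le> N"
        moreover have "c \<le> lam j" using hlt[OF j] by (simp add: c_def)
        ultimately show "Rlt p a Q X I C (int j) (int d) \<noteq> 0"
          using j by (intro Rlt_nz[OF g]) (auto simp: I_def C_def)
      qed
      thus "Rlt p a Q X I C (int j) (int (lam j)) = Rlt p a Q X I C (int j) (int N) * (\<Prod>d\<in>{lam j<..N}. FL j d)"
        by (simp add: FL_def)
    qed
    have s3: "(\<Prod>k\<in>{1..<c}. Rlt p (a * Q * X) (inverse X) (inverse Q) C I (int k) (int (mu k)))
       = (\<Prod>k\<in>{1..<c}. Rlt p (a * Q * X) (inverse X) (inverse Q) C I (int k) I)"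
      by (rule prod.cong) (auto simp: mlt I_def)
    have s4: "(\<Prod>k\<in>{c<..N}. Rgt p (a * Q * X) (inverse X) (inverse Q) C I (int k) (int (mu k)))
       = (\<Prod>k\<in>{c<..N}. Rgt p (a * Q * X) (inverse X) (inverse Q) C I (int k) (int (i0 - 1)))
         * (\<Prod>k\<in>{c<..N}. \<Prod>m\<in>{mu k<..i0 - 1}. FR k m)"
    proof (subst prod.distrib[symmetric], rule prod.cong[OF refl])
      fix k assume k: "k \<in> {c<..N}"
      have "Rgt p (a * Q * X) (inverse X) (inverse Q) C I (int k) (int (mu k))
          = Rgt p (a * Q * X) (inverse X) (inverse Q) C I (int k) (int (i0 - 1))
            * (\<Prod>m\<in>{mu k<..i0 - 1}. Rgt p (a * Q * X) (inverse X) (inverse Q) C I (int k) (int (m - 1))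
                 / Rgt p (a * Q * X) (inverse X) (inverse Q) C I (int k) (int m))"
      proof (rule telescope_down[where f="\<lambda>m. Rgt p (a * Q * X) (inverse X) (inverse Q) C I (int k) (int m)"])
        show "mu k \<le> i0 - 1" using mgt[OF k] by simp
        fix m assume "mu k \<le> m" "m \<le> i0 - 1"
        thus "Rgt p (a * Q * X) (inverse X) (inverse Q) C I (int k) (int m) \<noteq> 0"
          using k i01 by (intro Rgt_nz[OF g']) (auto simp: I_def C_def)
      qed
      thus "Rgt p (a * Q * X) (inverse X) (inverse Q) C I (int k) (int (mu k))
          = Rgt p (a * Q * X) (inverse X) (inverse Q) C I (int k) (int (i0 - 1)) * (\<Prod>m\<in>{mu k<..i0 - 1}. FR k m)"
        by (simp add: FR_def)
    qed
    have s5: "(\<Prod>j\<in>{1..<i0}. \<Prod>d\<in>{lam j<..N}. FL j d) = (\<Prod>k\<in>{c<..N}. \<Prod>m\<in>{mu k<..i0 - 1}. FL m k)"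
      unfolding mu_def by (rule swap_noncells[OF L i01(2)]) (use hlt in \<open>auto simp: c_def\<close>)
    have s6: "(\<Prod>k\<in>{c<..N}. \<Prod>m\<in>{mu k<..i0 - 1}. FL m k) = (\<Prod>k\<in>{c<..N}. \<Prod>m\<in>{mu k<..i0 - 1}. FR k m)"
    proof (intro prod.cong refl)
      fix k m assume k: "k \<in> {c<..N}" and m: "m \<in> {mu k<..i0 - 1}"
      have m1: "1 \<le> m" "m < i0" using m i01 by auto
      have "Rlt p a Q X I C (int m) (int k - 1) / Rlt p a Q X I C (int m) (int k)
          = Rgt p (a * Q * X) (inverse X) (inverse Q) C I (int k) (int m - 1) / Rgt p (a * Q * X) (inverse X) (inverse Q) C I (int k) (int m)"
        by (rule noncell[OF nz p g]) (use m1 k c1 in \<open>auto simp: I_def C_def\<close>)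
      moreover have "int (k - 1) = int k - 1" "int (m - 1) = int m - 1" using k c1 m1 by auto
      ultimately show "FL m k = FR k m" unfolding FL_def FR_def by simp
    qed
    have s7: "rS p n N a Q X I C * (\<Prod>j\<in>{i0<..n}. Rgt p a Q X I C (int j) 0)
           * (\<Prod>j\<in>{1..<i0}. Rlt p a Q X I C (int j) (int N))
       = rS p N n (a * Q * X) (inverse X) (inverse Q) C I
           * (\<Prod>k\<in>{1..<c}. Rlt p (a * Q * X) (inverse X) (inverse Q) C I (int k) I)
           * (\<Prod>k\<in>{c<..N}. Rgt p (a * Q * X) (inverse X) (inverse Q) C I (int k) (int (i0 - 1)))"
      using boundary[OF nz p g i01 c1] i01 by (simp add: I_def C_def of_nat_diff)
    have C: "rS p n N a Q X (int i0) (int u + 1)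
      * (\<Prod>j\<in>{i0<..n}. Rgt p a Q X (int i0) (int u + 1) (int j) (int (lam j)))
      * (\<Prod>j\<in>{1..<i0}. Rlt p a Q X (int i0) (int u + 1) (int j) (int (lam j)))
      = rS p N n (a * Q * X) (inverse X) (inverse Q) (int c) (int (i0 - 1) + 1)
      * (\<Prod>k\<in>{c<..N}. Rgt p (a * Q * X) (inverse X) (inverse Q) (int c) (int (i0 - 1) + 1) (int k) (int (mu k)))
      * (\<Prod>k\<in>{1..<c}. Rlt p (a * Q * X) (inverse X) (inverse Q) (int c) (int (i0 - 1) + 1) (int k) (int (mu k)))"
      unfolding eI I_def[symmetric] C_def[symmetric] s1 s2 s3 s4 s5 s6
      using s7 by (simp add: mult_ac)
    show ?thesis
      using A B C IH by (simp add: mu_def)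
  qed
qed

lemma epoch_tendsto:
  assumes p: "norm p < 1" and y: "(yS \<longlongrightarrow> y) F" and Q: "(QS \<longlongrightarrow> Q) F"
    and nz: "y \<noteq> 0" "Q \<noteq> 0" and k: "0 \<le> k"
  shows "((\<lambda>t. epoch p (yS t) (QS t) k) \<longlongrightarrow> epoch p y Q k) F"
proof -
  have "((\<lambda>t. \<Prod>j<nat k. Eth p (yS t * QS t ^ j)) \<longlongrightarrow> (\<Prod>j<nat k. Eth p (y * Q ^ j))) F"
  proof (rule tendsto_prod)
    fix j
    show "((\<lambda>t. Eth p (yS t * QS t ^ j)) \<longlongrightarrow> Eth p (y * Q ^ j)) F"
      by (rule Eth_tendsto[OF p]) (use y Q nz in \<open>auto intro!: tendsto_intros\<close>)
  qed
  thus ?thesis using k by (simp add: epoch_def)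
qed

lemma epochP2: "epochP p (u # [] @ [v]) Q X n l
   = (\<Prod>j\<in>{1..n}. epoch p (u * X powi (1 - int j)) Q (l j)) * (\<Prod>j\<in>{1..n}. epoch p (v * X powi (1 - int j)) Q (l j))"
  by (simp add: epochP_def)

lemma epochP2': "epochP p (u # map f [] @ [v]) Q X n l
   = (\<Prod>j\<in>{1..n}. epoch p (u * X powi (1 - int j)) Q (l j)) * (\<Prod>j\<in>{1..n}. epoch p (v * X powi (1 - int j)) Q (l j))"
  by (simp add: epochP_def)

lemma omega0_tendsto:
  assumes p: "norm p < 1" and L: "lam \<in> Lam n M"
    and ta: "(aS \<longlongrightarrow> a) F" and tQ: "(QS \<longlongrightarrow> Q) F" and tX: "(XS \<longlongrightarrow> X) F"
    and nz: "a \<noteq> 0" "Q \<noteq> 0" "X \<noteq> 0"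
    and d1: "\<forall>i\<in>{1..n}. Eth p (a * X powi (2 * (1 - int i))) \<noteq> 0"
    and d2: "\<forall>i\<in>{1..n}. \<forall>j\<in>{i<..n}. Eth p (X powi (int j - int i)) \<noteq> 0
                         \<and> Eth p (a * X powi (2 - int i - int j)) \<noteq> 0"
    and d3: "\<forall>i\<in>{1..n}. \<forall>j\<in>{i<..n}.
           epoch p (a * Q * X powi (1 - int i - int j)) Q (int (lam i) + int (lam j)) \<noteq> 0
         \<and> epoch p (Q * X powi (int j - int i - 1)) Q (int (lam i) - int (lam j)) \<noteq> 0"
    and d4: "epochP p ((Q * X powi (int n - 1)) # map (\<lambda>b. a * Q / b) [] @ [a * Q powi (int M + 1)]) Q X n
           (\<lambda>i. int (lam i)) \<noteq> 0"
  shows "((\<lambda>t. omega_term p n M (aS t) [] (QS t) (XS t) lam) \<longlongrightarrow> omega_term p n M a [] Q X lam) F"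
proof -
  note ET = Eth_tendsto[OF p]
  have T1: "((\<lambda>t. \<Prod>i\<in>{1..n}.
        Eth p (aS t * XS t powi (2 * (1 - int i)) * QS t powi (2 * int (lam i))) / Eth p (aS t * XS t powi (2 * (1 - int i)))
        * QS t powi (int (lam i)) * XS t powi (2 * (int i - 1) * int (lam i)))
      \<longlongrightarrow> (\<Prod>i\<in>{1..n}.
        Eth p (a * X powi (2 * (1 - int i)) * Q powi (2 * int (lam i))) / Eth p (a * X powi (2 * (1 - int i)))
        * Q powi (int (lam i)) * X powi (2 * (int i - 1) * int (lam i)))) F"
  proof (rule tendsto_prod)
    fix i assume i: "i \<in> {1..n}"
    show "((\<lambda>t. Eth p (aS t * XS t powi (2 * (1 - int i)) * QS t powi (2 * int (lam i))) / Eth p (aS t * XS t powi (2 * (1 - int i)))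
        * QS t powi (int (lam i)) * XS t powi (2 * (int i - 1) * int (lam i)))
      \<longlongrightarrow> Eth p (a * X powi (2 * (1 - int i)) * Q powi (2 * int (lam i))) / Eth p (a * X powi (2 * (1 - int i)))
        * Q powi (int (lam i)) * X powi (2 * (int i - 1) * int (lam i))) F"
      using d1 i nz ta tQ tX
      by (intro tendsto_intros ET) auto
  qed
  have T2: "((\<lambda>t. \<Prod>i\<in>{1..n}. \<Prod>j\<in>{i<..n}.
        Eth p (XS t powi (int j - int i) * QS t powi (int (lam i) - int (lam j))) / Eth p (XS t powi (int j - int i))
        * (Eth p (aS t * XS t powi (2 - int i - int j) * QS t powi (int (lam i) + int (lam j)))
             / Eth p (aS t * XS t powi (2 - int i - int j)))
        * (epoch p (aS t * XS t powi (3 - int i - int j)) (QS t) (int (lam i) + int (lam j))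
           * epoch p (XS t powi (int j - int i + 1)) (QS t) (int (lam i) - int (lam j)))
        / (epoch p (aS t * QS t * XS t powi (1 - int i - int j)) (QS t) (int (lam i) + int (lam j))
           * epoch p (QS t * XS t powi (int j - int i - 1)) (QS t) (int (lam i) - int (lam j))))
      \<longlongrightarrow> (\<Prod>i\<in>{1..n}. \<Prod>j\<in>{i<..n}.
        Eth p (X powi (int j - int i) * Q powi (int (lam i) - int (lam j))) / Eth p (X powi (int j - int i))
        * (Eth p (a * X powi (2 - int i - int j) * Q powi (int (lam i) + int (lam j)))
             / Eth p (a * X powi (2 - int i - int j)))
        * (epoch p (a * X powi (3 - int i - int j)) Q (int (lam i) + int (lam j))
           * epoch p (X powi (int j - int i + 1)) Q (int (lam i) - int (lam j)))
        / (epoch p (a * Q * X powi (1 - int i - int j)) Q (int (lam i) + int (lam j))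
           * epoch p (Q * X powi (int j - int i - 1)) Q (int (lam i) - int (lam j))))) F"
  proof (intro tendsto_prod)
    fix i j assume i: "i \<in> {1..n}" and j: "j \<in> {i<..n}"
    have le: "0 \<le> int (lam i) - int (lam j)" using LamD(2)[OF L, of i j] i j by auto
    have le2: "0 \<le> int (lam i) + int (lam j)" by simp
    note ept = epoch_tendsto[OF p]
    show "((\<lambda>t. Eth p (XS t powi (int j - int i) * QS t powi (int (lam i) - int (lam j))) / Eth p (XS t powi (int j - int i))
        * (Eth p (aS t * XS t powi (2 - int i - int j) * QS t powi (int (lam i) + int (lam j)))
             / Eth p (aS t * XS t powi (2 - int i - int j)))
        * (epoch p (aS t * XS t powi (3 - int i - int j)) (QS t) (int (lam i) + int (lam j))
           * epoch p (XS t powi (int j - int i + 1)) (QS t) (int (lam i) - int (lam j)))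
        / (epoch p (aS t * QS t * XS t powi (1 - int i - int j)) (QS t) (int (lam i) + int (lam j))
           * epoch p (QS t * XS t powi (int j - int i - 1)) (QS t) (int (lam i) - int (lam j))))
      \<longlongrightarrow> Eth p (X powi (int j - int i) * Q powi (int (lam i) - int (lam j))) / Eth p (X powi (int j - int i))
        * (Eth p (a * X powi (2 - int i - int j) * Q powi (int (lam i) + int (lam j)))
             / Eth p (a * X powi (2 - int i - int j)))
        * (epoch p (a * X powi (3 - int i - int j)) Q (int (lam i) + int (lam j))
           * epoch p (X powi (int j - int i + 1)) Q (int (lam i) - int (lam j)))
        / (epoch p (a * Q * X powi (1 - int i - int j)) Q (int (lam i) + int (lam j))
           * epoch p (Q * X powi (int j - int i - 1)) Q (int (lam i) - int (lam j)))) F"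
      using d2 d3 i j nz ta tQ tX le le2
      by (intro tendsto_intros ET ept) auto
  qed
  have T3: "\<And>v vS. (vS \<longlongrightarrow> v) F \<Longrightarrow> v \<noteq> 0 \<Longrightarrow>
      ((\<lambda>t. \<Prod>j\<in>{1..n}. epoch p (vS t * XS t powi (1 - int j)) (QS t) (int (lam j)))
        \<longlongrightarrow> (\<Prod>j\<in>{1..n}. epoch p (v * X powi (1 - int j)) Q (int (lam j)))) F"
    by (intro tendsto_prod epoch_tendsto[OF p]) (use nz tX tQ in \<open>auto intro!: tendsto_intros\<close>)
  have T4: "((\<lambda>t. epochP p ((aS t * XS t powi (1 - int n)) # [] @ [QS t powi (- int M)]) (QS t) (XS t) n (\<lambda>i. int (lam i)))
     \<longlongrightarrow> epochP p ((a * X powi (1 - int n)) # [] @ [Q powi (- int M)]) Q X n (\<lambda>i. int (lam i))) F"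
    unfolding epochP2 by (intro tendsto_mult T3) (use nz ta tQ tX in \<open>auto intro!: tendsto_intros\<close>)
  have T5: "((\<lambda>t. epochP p ((QS t * XS t powi (int n - 1)) # map (\<lambda>b. aS t * QS t / b) [] @ [aS t * QS t powi (int M + 1)]) (QS t) (XS t) n (\<lambda>i. int (lam i)))
     \<longlongrightarrow> epochP p ((Q * X powi (int n - 1)) # map (\<lambda>b. a * Q / b) [] @ [a * Q powi (int M + 1)]) Q X n (\<lambda>i. int (lam i))) F"
    unfolding epochP2' by (intro tendsto_mult T3) (use nz ta tQ tX in \<open>auto intro!: tendsto_intros\<close>)
  show ?thesis unfolding omega_term_def
    by (intro tendsto_divide tendsto_mult T1 T2 T4 T5 d4)
qed


lemma omega_split:
  "omega_term p n M a bs Q X lam = omega_term p n M a [] Q X lam *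
     (epochP p bs Q X n (\<lambda>i. int (lam i)) / epochP p (map (\<lambda>b. a * Q / b) bs) Q X n (\<lambda>i. int (lam i)))"
  unfolding omega_term_def epochP_def
  by (simp add: divide_inverse mult_ac)

lemma epoch_cells:
  assumes nz: "q \<noteq> 0" "x \<noteq> 0" and L: "lam \<in> Lam n N"
  shows "(\<Prod>j\<in>{1..n}. epoch p (y * x powi (1 - int j)) q (int (lam j)))
       = (\<Prod>k\<in>{1..N}. epoch p (y * (inverse q) powi (1 - int k)) (inverse x) (int (conjp n N lam k)))"
proof -
  have "(\<Prod>j\<in>{1..n}. epoch p (y * x powi (1 - int j)) q (int (lam j)))
      = (\<Prod>j\<in>{1..n}. \<Prod>c\<in>{..<lam j}. Eth p (y * x powi (1 - int j) * q ^ c))"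
    by (simp add: epoch_def)
  also have "\<dots> = (\<Prod>k\<in>{1..N}. \<Prod>m\<in>{..<conjp n N lam k}. Eth p (y * x powi (1 - int (Suc m)) * q ^ (k - 1)))"
    by (rule cells_prod[OF L])
  also have "\<dots> = (\<Prod>k\<in>{1..N}. \<Prod>m\<in>{..<conjp n N lam k}. Eth p (y * (inverse q) powi (1 - int k) * (inverse x) ^ m))"
  proof (intro prod.cong refl)
    fix k m assume k: "k \<in> {1..N}"
    have hx: "x powi (- int m) = inverse x ^ m"
      by (simp add: power_int_minus power_inverse)
    have e: "1 - int k = - int (k - 1)" using k by auto
    have hq: "inverse q powi (1 - int k) = q ^ (k - 1)"
      unfolding e by (simp add: power_int_minus power_int_inverse power_inverse)
    show "Eth p (y * x powi (1 - int (Suc m)) * q ^ (k - 1)) = Eth p (y * (inverse q) powi (1 - int k) * (inverse x) ^ m)"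
      by (simp add: hx hq mult_ac)
  qed
  also have "\<dots> = (\<Prod>k\<in>{1..N}. epoch p (y * (inverse q) powi (1 - int k)) (inverse x) (int (conjp n N lam k)))"
    by (simp add: epoch_def)
  finally show ?thesis .
qed

lemma bpart_eq:
  assumes nz: "q \<noteq> 0" "x \<noteq> 0" and L: "lam \<in> Lam n N"
  shows "epochP p bs q x n (\<lambda>i. int (lam i)) / epochP p (map (\<lambda>b. a * q / b) bs) q x n (\<lambda>i. int (lam i))
    = epochP p bs (inverse x) (inverse q) N (\<lambda>i. int (conjp n N lam i))
      / epochP p (map (\<lambda>b. a * q * x * inverse x / b) bs) (inverse x) (inverse q) N (\<lambda>i. int (conjp n N lam i))"
proof -
  have e: "a * q * x * inverse x = a * q" using nz by simp
  show ?thesis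
    unfolding epochP_def e map_map o_def epoch_cells[OF nz L] ..
qed

lemma powi_inj_pos:
  fixes t s :: real
  assumes "0 < t" "0 < s" "e \<noteq> 0" "t powi e = s powi e"
  shows "t = s"
proof (cases "e > 0")
  case True
  then obtain k where k: "e = int k" "0 < k" by (metis zero_less_imp_eq_int of_nat_0_less_iff)
  hence "t ^ k = s ^ k" using assms(4) by simp
  thus ?thesis using power_eq_iff_eq_base[OF k(2) less_imp_le[OF assms(1)] less_imp_le[OF assms(2)]] by simp
next
  case False
  then obtain k where k: "e = - int k" "0 < k" using assms(3)
    by (metis neg_0_less_iff_less not_less_iff_gr_or_eq zero_less_imp_eq_int of_nat_0_less_iff minus_minus)
  hence "inverse (t ^ k) = inverse (s ^ k)" using assms(4) by (simp add: power_int_minus)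
  hence "t ^ k = s ^ k" by simp
  thus ?thesis using power_eq_iff_eq_base[OF k(2) less_imp_le[OF assms(1)] less_imp_le[OF assms(2)]] by simp
qed

lemma countable_bad:
  fixes E :: "'i::countable \<Rightarrow> int" and W :: "'i \<Rightarrow> complex" and I :: "'i set"
  assumes "\<And>i. i \<in> I \<Longrightarrow> E i \<noteq> 0"
  shows "countable {t::real. 0 < t \<and> (\<exists>i\<in>I. complex_of_real (t powi E i) = W i)}"
proof -
  define f where "f i = (THE t. 0 < t \<and> complex_of_real (t powi E i) = W i)" for i
  have "{t::real. 0 < t \<and> (\<exists>i\<in>I. complex_of_real (t powi E i) = W i)} \<subseteq> f ` I"
  proof
    fix t assume "t \<in> {t::real. 0 < t \<and> (\<exists>i\<in>I. complex_of_real (t powi E i) = W i)}"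
    then obtain i where t: "0 < t" and i: "i \<in> I" and w: "complex_of_real (t powi E i) = W i" by auto
    have "f i = t" unfolding f_def
    proof (rule the_equality)
      show "0 < t \<and> complex_of_real (t powi E i) = W i" using t w by simp
      fix s assume s: "0 < s \<and> complex_of_real (s powi E i) = W i"
      hence "s powi E i = t powi E i" using w by (metis of_real_eq_iff)
      thus "s = t" using powi_inj_pos[of s t "E i"] s t assms[OF i] by simp
    qed
    thus "t \<in> f ` I" using i by force
  qed
  moreover have "countable (f ` I)" by simp
  ultimately show ?thesis by (rule countable_subset)
qed

lemma avoid_countable:
  fixes B :: "real set"
  assumes "countable B" "0 < e"
  obtains t where "1 < t" "t < 1 + e" "t \<notin> B"
proof -
  have "\<not> {1<..<1 + e} \<subseteq> B"
  proof
    assume "{1<..<1 + e} \<subseteq> B"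
    hence "countable {1<..<1 + e}" using assms(1) countable_subset by blast
    thus False using uncountable_open_interval[of 1 "1 + e"] assms(2) by simp
  qed
  then obtain t where "t \<in> {1<..<1 + e}" "t \<notin> B" by blast
  thus ?thesis using that by auto
qed

lemma norm_scale_close:
  fixes c :: complex and t e :: real
  assumes "1 < t" "t < 1 + e / (norm c + 1)" "0 < e"
  shows "norm (c * complex_of_real t - c) \<le> e"
proof -
  have "c * complex_of_real t - c = c * complex_of_real (t - 1)" by (simp add: algebra_simps)
  hence "norm (c * complex_of_real t - c) = norm c * \<bar>t - 1\<bar>"
    by (simp only: norm_mult norm_of_real)
  also have "\<dots> \<le> norm c * (e / (norm c + 1))" using assms by (intro mult_left_mono) auto
  also have "\<dots> \<le> e"
  proof -
    have "norm c * (e / (norm c + 1)) = e * (norm c / (norm c + 1))" by simp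
    also have "\<dots> \<le> e * 1"
    proof (intro mult_left_mono)
      have "norm c \<le> norm c + 1" by simp
      moreover have "0 < norm c + 1" by (simp add: add_nonneg_pos)
      ultimately show "norm c / (norm c + 1) \<le> 1" by (simp add: divide_le_eq_1)
    qed (use assms(3) in simp)
    finally show ?thesis by simp
  qed
  finally show ?thesis .
qed

lemma gen_approx:
  assumes p: "norm p < 1" and nz: "a \<noteq> 0" "q \<noteq> 0" "x \<noteq> 0" and e: "0 < e"
  shows "\<exists>a' q' x'. a' \<noteq> 0 \<and> q' \<noteq> 0 \<and> x' \<noteq> 0 \<and> norm (a' - a) \<le> e \<and> norm (q' - q) \<le> e \<and> norm (x' - x) \<le> e
     \<and> gen p a' q' x'"
proof -
  define e1 where "e1 c = e / (norm c + 1)" for c :: complex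
  have e1: "0 < e1 c" for c
  proof -
    have "0 < norm c + 1" by (simp add: add_nonneg_pos)
    thus ?thesis using e by (simp add: e1_def)
  qed
  define B1 where "B1 = {t::real. 0 < t \<and> (\<exists>i\<in>{(b::int, k::int). b \<noteq> 0}. complex_of_real (t powi fst i) = p powi snd i / q powi fst i)}"
  have cB1: "countable B1" unfolding B1_def by (rule countable_bad) auto
  obtain t1 where t1: "1 < t1" "t1 < 1 + e1 q" "t1 \<notin> B1" using avoid_countable[OF cB1 e1] by blast
  define q' where "q' = q * complex_of_real t1"
  define B2 where "B2 = {t::real. 0 < t \<and> (\<exists>i\<in>{(b::int, c::int, k::int). c \<noteq> 0}.
     complex_of_real (t powi fst (snd i)) = p powi snd (snd i) / (q' powi fst i * x powi fst (snd i)))}"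
  have cB2: "countable B2" unfolding B2_def by (rule countable_bad) auto
  obtain t2 where t2: "1 < t2" "t2 < 1 + e1 x" "t2 \<notin> B2" using avoid_countable[OF cB2 e1] by blast
  define x' where "x' = x * complex_of_real t2"
  define B3 where "B3 = {t::real. 0 < t \<and> (\<exists>i\<in>{(g::int, b::int, c::int, k::int). g \<noteq> 0}.
     complex_of_real (t powi fst i) = p powi snd (snd (snd i)) / (a powi fst i * q' powi fst (snd i) * x' powi fst (snd (snd i))))}"
  have cB3: "countable B3" unfolding B3_def by (rule countable_bad) auto
  obtain t3 where t3: "1 < t3" "t3 < 1 + e1 a" "t3 \<notin> B3" using avoid_countable[OF cB3 e1] by blast
  define a' where "a' = a * complex_of_real t3"
  have nz': "a' \<noteq> 0" "q' \<noteq> 0" "x' \<noteq> 0" using nz t1 t2 t3 by (auto simp: a'_def q'_def x'_def)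
  have close: "norm (a' - a) \<le> e" "norm (q' - q) \<le> e" "norm (x' - x) \<le> e"
    using norm_scale_close[OF t1(1) _ e] norm_scale_close[OF t2(1) _ e] norm_scale_close[OF t3(1) _ e] t1 t2 t3
    by (auto simp: a'_def q'_def x'_def e1_def)
  have g: "gen p a' q' x'"
    unfolding gen_def
  proof (intro allI impI)
    fix g b c :: int assume gb: "\<bar>g\<bar> \<le> 1" and nt: "g \<noteq> 0 \<or> b \<noteq> 0 \<or> c \<noteq> 0"
    show "Em p a' q' x' g b c \<noteq> 0"
    proof
      assume E0: "Em p a' q' x' g b c = 0"
      have y0: "mon a' q' x' g b c \<noteq> 0" by (rule mon_nz[OF nz'])
      obtain k where k: "mon a' q' x' g b c = p powi k"
        using Eth_zero[OF p y0] E0 by (auto simp: Em_def)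
      show False
      proof (cases "g \<noteq> 0")
        case True
        have "mon a' q' x' g b c = complex_of_real (t3 powi g) * (a powi g * q' powi b * x' powi c)"
          by (simp add: mon_def a'_def power_int_mult_distrib mult_ac)
        hence "complex_of_real (t3 powi g) = p powi k / (a powi g * q' powi b * x' powi c)"
          using k nz nz' by (simp add: field_simps)
        hence "t3 \<in> B3" unfolding B3_def using t3 True
          by (auto intro!: bexI[where x="(g, b, c, k)"])
        thus False using t3 by simp
      next
        case False
        hence g0: "g = 0" by simp
        show False
        proof (cases "c \<noteq> 0")
          case True
          have "mon a' q' x' g b c = complex_of_real (t2 powi c) * (q' powi b * x powi c)"
            by (simp add: mon_def g0 x'_def power_int_mult_distrib mult_ac)
          hence "complex_of_real (t2 powi c) = p powi k / (q' powi b * x powi c)"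
            using k nz nz' by (simp add: field_simps)
          hence "t2 \<in> B2" unfolding B2_def using t2 True
            by (auto intro!: bexI[where x="(b, c, k)"])
          thus False using t2 by simp
        next
          case False
          hence c0: "c = 0" by simp
          hence b0: "b \<noteq> 0" using nt g0 by simp
          have "mon a' q' x' g b c = complex_of_real (t1 powi b) * q powi b"
            by (simp add: mon_def g0 c0 q'_def power_int_mult_distrib mult_ac)
          hence "complex_of_real (t1 powi b) = p powi k / q powi b"
            using k nz nz' by (simp add: field_simps)
          hence "t1 \<in> B1" unfolding B1_def using t1 b0
            by (auto intro!: bexI[where x="(b, k)"])
          thus False using t1 by simp
        qed
      qed
    qed
  qed
  show ?thesis using nz' close g by blast
qed

lemma gen_seq:
  assumes p: "norm p < 1" and nz: "a \<noteq> 0" "q \<noteq> 0" "x \<noteq> 0"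
  shows "\<exists>aS qS xS. (\<forall>m. aS m \<noteq> 0 \<and> qS m \<noteq> 0 \<and> xS m \<noteq> 0 \<and> gen p (aS m) (qS m) (xS m))
    \<and> aS \<longlonglongrightarrow> a \<and> qS \<longlonglongrightarrow> q \<and> xS \<longlonglongrightarrow> x"
proof -
  define P where "P m z = (fst z \<noteq> 0 \<and> fst (snd z) \<noteq> 0 \<and> snd (snd z) \<noteq> 0
      \<and> norm (fst z - a) \<le> inverse (real (Suc m)) \<and> norm (fst (snd z) - q) \<le> inverse (real (Suc m))
      \<and> norm (snd (snd z) - x) \<le> inverse (real (Suc m)) \<and> gen p (fst z) (fst (snd z)) (snd (snd z)))" for m z
  have "\<forall>m. \<exists>z. P m z"
  proof
    fix m
    have "0 < inverse (real (Suc m))" by simp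
    from gen_approx[OF p nz this] obtain a' q' x' where
      "a' \<noteq> 0 \<and> q' \<noteq> 0 \<and> x' \<noteq> 0 \<and> norm (a' - a) \<le> inverse (real (Suc m))
      \<and> norm (q' - q) \<le> inverse (real (Suc m)) \<and> norm (x' - x) \<le> inverse (real (Suc m)) \<and> gen p a' q' x'"
      by blast
    hence "P m (a', q', x')" by (simp add: P_def)
    thus "\<exists>z. P m z" ..
  qed
  then obtain Z where Z: "\<And>m. P m (Z m)" using choice by blast
  define aS where "aS m = fst (Z m)" for m
  define qS where "qS m = fst (snd (Z m))" for m
  define xS where "xS m = snd (snd (Z m))" for m
  have H: "\<And>m. aS m \<noteq> 0 \<and> qS m \<noteq> 0 \<and> xS m \<noteq> 0 \<and> norm (aS m - a) \<le> inverse (real (Suc m))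
      \<and> norm (qS m - q) \<le> inverse (real (Suc m)) \<and> norm (xS m - x) \<le> inverse (real (Suc m)) \<and> gen p (aS m) (qS m) (xS m)"
    using Z unfolding P_def aS_def qS_def xS_def by blast
  have lim: "(\<lambda>m. f m) \<longlonglongrightarrow> c" if "\<And>m. norm (f m - c) \<le> inverse (real (Suc m))" for f :: "nat \<Rightarrow> complex" and c
  proof (rule LIM_zero_cancel)
    show "(\<lambda>m. f m - c) \<longlonglongrightarrow> 0"
      by (rule Lim_null_comparison[OF _ LIMSEQ_inverse_real_of_nat]) (use that in \<open>auto intro: always_eventually\<close>)
  qed
  have "aS \<longlonglongrightarrow> a" by (rule lim) (use H in blast)
  moreover have "qS \<longlonglongrightarrow> q" by (rule lim) (use H in blast)
  moreover have "xS \<longlonglongrightarrow> x" by (rule lim) (use H in blast)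
  moreover have "\<forall>m. aS m \<noteq> 0 \<and> qS m \<noteq> 0 \<and> xS m \<noteq> 0 \<and> gen p (aS m) (qS m) (xS m)"
    using H by blast
  ultimately show ?thesis by blast
qed

lemma epochP_drop:
  "epochP p (y0 # ys @ [y1]) Q X n l \<noteq> 0 \<Longrightarrow> epochP p (y0 # map f [] @ [y1]) Q X n l \<noteq> 0"
  by (simp add: epochP_def)

lemma core_eq:
  fixes p a q x :: complex
  assumes p: "norm p < 1" and nz: "a \<noteq> 0" "q \<noteq> 0" "x \<noteq> 0"
    and ndL: "omega_nondeg p n N a bs q x"
    and ndR: "omega_nondeg p N n (a * q * x) bs (inverse x) (inverse q)"
    and L: "lam \<in> Lam n N"
  shows "omega_term p n N a [] q x lam = omega_term p N n (a * q * x) [] (inverse x) (inverse q) (conjp n N lam)"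
proof -
  define mu where "mu = conjp n N lam"
  have Lmu: "mu \<in> Lam N n" unfolding mu_def by (rule conjp_Lam[OF L])
  obtain aS qS xS where S0: "\<forall>m. aS m \<noteq> 0 \<and> qS m \<noteq> 0 \<and> xS m \<noteq> 0 \<and> gen p (aS m) (qS m) (xS m)"
    and ta: "aS \<longlonglongrightarrow> a" and tq: "qS \<longlonglongrightarrow> q" and tx: "xS \<longlonglongrightarrow> x"
    using gen_seq[OF p nz] by blast
  have S: "\<And>m. aS m \<noteq> 0" "\<And>m. qS m \<noteq> 0" "\<And>m. xS m \<noteq> 0" "\<And>m. gen p (aS m) (qS m) (xS m)"
    using S0 by auto
  have eqm: "omega_term p n N (aS m) [] (qS m) (xS m) lam
      = omega_term p N n (aS m * qS m * xS m) [] (inverse (xS m)) (inverse (qS m)) mu" for m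
  proof -
    have nz1: "aS m \<noteq> 0" "qS m \<noteq> 0" "xS m \<noteq> 0" using S by auto
    have nz2: "aS m * qS m * xS m \<noteq> 0" "inverse (xS m) \<noteq> 0" "inverse (qS m) \<noteq> 0" using nz1 by auto
    have "omega_term p n N (aS m) [] (qS m) (xS m) lam = ct p n N (aS m) (qS m) (xS m) lam"
      by (rule ct_eq[OF nz1 L])
    also have "\<dots> = ct p N n (aS m * qS m * xS m) (inverse (xS m)) (inverse (qS m)) mu"
      unfolding mu_def by (rule core_generic[OF nz1 p S(4) L])
    also have "\<dots> = omega_term p N n (aS m * qS m * xS m) [] (inverse (xS m)) (inverse (qS m)) mu"
      by (rule ct_eq[OF nz2 Lmu, symmetric])
    finally show ?thesis .
  qed
  note ndl = ndL[unfolded omega_nondeg_def]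
  note ndr = ndR[unfolded omega_nondeg_def]
  have t1: "(\<lambda>m. omega_term p n N (aS m) [] (qS m) (xS m) lam) \<longlonglongrightarrow> omega_term p n N a [] q x lam"
  proof (rule omega0_tendsto[OF p L ta tq tx nz])
    show "\<forall>i\<in>{1..n}. Eth p (a * x powi (2 * (1 - int i))) \<noteq> 0" by (rule ndl[THEN conjunct2, THEN conjunct1])
    show "\<forall>i\<in>{1..n}. \<forall>j\<in>{i<..n}. Eth p (x powi (int j - int i)) \<noteq> 0 \<and> Eth p (a * x powi (2 - int i - int j)) \<noteq> 0"
      by (rule ndl[THEN conjunct2, THEN conjunct2, THEN conjunct1])
    show "\<forall>i\<in>{1..n}. \<forall>j\<in>{i<..n}.
           epoch p (a * q * x powi (1 - int i - int j)) q (int (lam i) + int (lam j)) \<noteq> 0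
         \<and> epoch p (q * x powi (int j - int i - 1)) q (int (lam i) - int (lam j)) \<noteq> 0"
      by (rule ndl[THEN conjunct2, THEN conjunct2, THEN conjunct2, rule_format, OF L, THEN conjunct1])
    show "epochP p ((q * x powi (int n - 1)) # map (\<lambda>b. a * q / b) [] @ [a * q powi (int N + 1)]) q x n
           (\<lambda>i. int (lam i)) \<noteq> 0"
      by (rule epochP_drop, rule ndl[THEN conjunct2, THEN conjunct2, THEN conjunct2, rule_format, OF L, THEN conjunct2])
  qed
  have nzR: "a * q * x \<noteq> 0" "inverse x \<noteq> 0" "inverse q \<noteq> 0" using nz by auto
  have t2: "(\<lambda>m. omega_term p N n (aS m * qS m * xS m) [] (inverse (xS m)) (inverse (qS m)) mu)
      \<longlonglongrightarrow> omega_term p N n (a * q * x) [] (inverse x) (inverse q) mu"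
  proof (rule omega0_tendsto[OF p Lmu _ _ _ nzR])
    show "(\<lambda>m. aS m * qS m * xS m) \<longlonglongrightarrow> a * q * x" using ta tq tx by (intro tendsto_intros)
    show "(\<lambda>m. inverse (xS m)) \<longlonglongrightarrow> inverse x" using tx nz by (intro tendsto_intros) auto
    show "(\<lambda>m. inverse (qS m)) \<longlonglongrightarrow> inverse q" using tq nz by (intro tendsto_intros) auto
    show "\<forall>i\<in>{1..N}. Eth p (a * q * x * inverse q powi (2 * (1 - int i))) \<noteq> 0" by (rule ndr[THEN conjunct2, THEN conjunct1])
    show "\<forall>i\<in>{1..N}. \<forall>j\<in>{i<..N}. Eth p (inverse q powi (int j - int i)) \<noteq> 0 \<and> Eth p (a * q * x * inverse q powi (2 - int i - int j)) \<noteq> 0"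
      by (rule ndr[THEN conjunct2, THEN conjunct2, THEN conjunct1])
    show "\<forall>i\<in>{1..N}. \<forall>j\<in>{i<..N}.
           epoch p (a * q * x * inverse x * inverse q powi (1 - int i - int j)) (inverse x) (int (mu i) + int (mu j)) \<noteq> 0
         \<and> epoch p (inverse x * inverse q powi (int j - int i - 1)) (inverse x) (int (mu i) - int (mu j)) \<noteq> 0"
      by (rule ndr[THEN conjunct2, THEN conjunct2, THEN conjunct2, rule_format, OF Lmu, THEN conjunct1])
    show "epochP p ((inverse x * inverse q powi (int N - 1)) # map (\<lambda>b. a * q * x * inverse x / b) [] @ [a * q * x * inverse x powi (int n + 1)]) (inverse x) (inverse q) N
           (\<lambda>i. int (mu i)) \<noteq> 0"
      by (rule epochP_drop, rule ndr[THEN conjunct2, THEN conjunct2, THEN conjunct2, rule_format, OF Lmu, THEN conjunct2])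
  qed
  have "(\<lambda>m. omega_term p n N (aS m) [] (qS m) (xS m) lam) \<longlonglongrightarrow> omega_term p N n (a * q * x) [] (inverse x) (inverse q) mu"
    using t2 by (simp add: eqm)
  thus ?thesis using t1 LIMSEQ_unique unfolding mu_def by blast
qed

theorem proposition3:
  fixes p a q x :: complex and bs :: "complex list" and r n N :: nat
  assumes "norm p < 1"
    and "r \<ge> 3" and "length bs = r - 3" and "n \<ge> 1"
    and "a \<noteq> 0" and "q \<noteq> 0" and "x \<noteq> 0" and "\<forall>b\<in>set bs. b \<noteq> 0"
    and "omega_nondeg p n N a bs q x"
    and "omega_nondeg p N n (a * q * x) bs (inverse x) (inverse q)"
  shows "Omega p n N a bs q x = Omega p N n (a * q * x) bs (inverse x) (inverse q)
       \<and> (\<forall>lam\<in>Lam n N. omega_term p n N a bs q x lam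
              = omega_term p N n (a * q * x) bs (inverse x) (inverse q) (conjp n N lam))"
proof -
  have p: "norm p < 1" and nz: "a \<noteq> 0" "q \<noteq> 0" "x \<noteq> 0" using assms by auto
  have tw: "omega_term p n N a bs q x lam = omega_term p N n (a * q * x) bs (inverse x) (inverse q) (conjp n N lam)"
    if L: "lam \<in> Lam n N" for lam
  proof -
    have "omega_term p n N a bs q x lam = omega_term p n N a [] q x lam *
     (epochP p bs q x n (\<lambda>i. int (lam i)) / epochP p (map (\<lambda>b. a * q / b) bs) q x n (\<lambda>i. int (lam i)))"
      by (rule omega_split)
    also have "omega_term p n N a [] q x lam = omega_term p N n (a * q * x) [] (inverse x) (inverse q) (conjp n N lam)"
      by (rule core_eq[OF p nz assms(9) assms(10) L])
    also have "epochP p bs q x n (\<lambda>i. int (lam i)) / epochP p (map (\<lambda>b. a * q / b) bs) q x n (\<lambda>i. int (lam i))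
      = epochP p bs (inverse x) (inverse q) N (\<lambda>i. int (conjp n N lam i))
        / epochP p (map (\<lambda>b. a * q * x * inverse x / b) bs) (inverse x) (inverse q) N (\<lambda>i. int (conjp n N lam i))"
      by (rule bpart_eq[OF nz(2,3) L])
    also have "omega_term p N n (a * q * x) [] (inverse x) (inverse q) (conjp n N lam) *
        (epochP p bs (inverse x) (inverse q) N (\<lambda>i. int (conjp n N lam i))
        / epochP p (map (\<lambda>b. a * q * x * inverse x / b) bs) (inverse x) (inverse q) N (\<lambda>i. int (conjp n N lam i)))
      = omega_term p N n (a * q * x) bs (inverse x) (inverse q) (conjp n N lam)"
      by (rule omega_split[symmetric])
    finally show ?thesis .
  qed
  have "Omega p n N a bs q x = (\<Sum>lam\<in>Lam n N. omega_term p N n (a * q * x) bs (inverse x) (inverse q) (conjp n N lam))"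
    unfolding Omega_def by (rule sum.cong) (auto simp: tw)
  also have "\<dots> = Omega p N n (a * q * x) bs (inverse x) (inverse q)"
    unfolding Omega_def by (rule sum.reindex_bij_betw[OF conjp_bij])
  finally show ?thesis using tw by blast
qed

end
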